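(* Let $B^H$ be a fractional Brownian motion with Hurst index $H\in(0,1)$. Then almost surely, for every continuous and bounded $\varphi:\mathbb R\to\mathbb R$, $$\frac1{\log n}\sum_{k=1}^{n}\frac1k\,\varphi\big(B^H_k/k^H\big)\longrightarrow E[\varphi(N)]\quad\text{as }n\to\infty,$$ where $N\sim\mathscr N(0,1)$.
   Context: A fractional Brownian motion with Hurst index $H\in(0,1)$ is a centered Gaussian process $(B^H_t)_{t\ge0}$ with continuous paths and covariance $E[B^H_tB^H_s]=\frac12(t^{2H}+s^{2H}-|t-s|^{2H})$. *)

theory Defs
  imports "HOL-Probability.Probability"
begin

definition gaussian_rv :: "'a measure \<Rightarrow> ('a \<Rightarrow> real) \<Rightarrow> bool" where
  "gaussian_rv M X \<longleftrightarrow>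
     (\<exists>\<mu> \<sigma>. 0 < \<sigma> \<and> distributed M lborel X (normal_density \<mu> \<sigma>))
   \<or> (\<exists>c. X \<in> borel_measurable M \<and> (AE \<omega> in M. X \<omega> = c))"

definition centered_gaussian_process :: "'a measure \<Rightarrow> (real \<Rightarrow> 'a \<Rightarrow> real) \<Rightarrow> bool" where
  "centered_gaussian_process M B \<longleftrightarrow>
     prob_space M
   \<and> (\<forall>t\<ge>0. B t \<in> borel_measurable M)
   \<and> (\<forall>I c. finite I \<longrightarrow> I \<subseteq> {0..} \<longrightarrow> gaussian_rv M (\<lambda>\<omega>. \<Sum>t\<in>I. c t * B t \<omega>))
   \<and> (\<forall>t\<ge>0. integrable M (B t) \<and> integral\<^sup>L M (B t) = 0)"

definition fbm :: "'a measure \<Rightarrow> real \<Rightarrow> (real \<Rightarrow> 'a \<Rightarrow> real) \<Rightarrow> bool" where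
  "fbm M H B \<longleftrightarrow>
     0 < H \<and> H < 1
   \<and> centered_gaussian_process M B
   \<and> (\<forall>\<omega>\<in>space M. continuous_on {0..} (\<lambda>t. B t \<omega>))
   \<and> (\<forall>t\<ge>0. \<forall>s\<ge>0. integral\<^sup>L M (\<lambda>\<omega>. B t \<omega> * B s \<omega>)
          = (t powr (2*H) + s powr (2*H) - \<bar>t - s\<bar> powr (2*H)) / 2)"

end

theory Submission
  imports Defs "HOL-Real_Asymp.Real_Asymp"
begin


lemma powr_conc_bern:
  fixes a s :: real assumes "0 < a" "a \<le> 1" "0 < s"
  shows "s powr a \<le> a * s + (1 - a)"
  using Youngs_inequality_0[of a "1-a" s 1] assms by simp

lemma powr_conv_bern:
  fixes a s :: real assumes "1 \<le> a" "0 \<le> s"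
  shows "1 + a * (s - 1) \<le> s powr a"
proof (cases "s = 0")
  case True then show ?thesis using assms by simp
next
  case False
  then have sp: "0 < s" using assms by simp
  have "(s powr a) powr (1/a) \<le> (1/a) * s powr a + (1 - 1/a)"
    using powr_conc_bern[of "1/a" "s powr a"] assms sp by simp
  moreover have "(s powr a) powr (1/a) = s" using assms sp by (simp add: powr_powr)
  ultimately have "s \<le> (1/a) * s powr a + (1 - 1/a)" by simp
  then have "a * s \<le> a * ((1/a) * s powr a + (1 - 1/a))" using assms by simp
  also have "\<dots> = s powr a + a - 1" using assms by (simp add: algebra_simps)
  finally show ?thesis by (simp add: algebra_simps)
qed

lemma powr_subadd:
  fixes a u v :: real assumes "0 < a" "a \<le> 1" "0 \<le> u" "0 \<le> v"
  shows "(u + v) powr a \<le> u powr a + v powr a"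
proof (cases "u + v = 0")
  case True then show ?thesis using assms by simp
next
  case False
  define w where "w = u + v"
  have wp: "0 < w" using False assms w_def by simp
  have 1: "u / w \<le> (u / w) powr a"
    using powr_mono'[of a 1 "u/w"] assms wp w_def by (simp add: divide_le_eq_1)
  have 2: "v / w \<le> (v / w) powr a"
    using powr_mono'[of a 1 "v/w"] assms wp w_def by (simp add: divide_le_eq_1)
  have "u / w + v / w = 1" using wp by (simp add: w_def add_divide_distrib[symmetric])
  then have "1 = u / w + v / w" by simp
  also have "\<dots> \<le> (u/w) powr a + (v/w) powr a" using 1 2 by simp
  also have "\<dots> = (u powr a + v powr a) / w powr a"
    using assms wp by (simp add: powr_divide add_divide_distrib)
  finally have "w powr a \<le> u powr a + v powr a" using wp by (simp add: le_divide_eq)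
  then show ?thesis by (simp add: w_def)
qed

lemma corr_norm_bound:
  fixes H x :: real assumes H: "0 < H" "H < 1" and x: "0 < x" "x \<le> 1"
  shows "0 \<le> (x powr (2*H) + 1 - (1 - x) powr (2*H)) / 2"
    and "(x powr (2*H) + 1 - (1 - x) powr (2*H)) / 2 \<le> 2 * x powr (H + min H (1 - H))"
proof -
  have "(1 - x) powr (2*H) \<le> 1" using x H by (intro powr_le1) auto
  moreover have "0 \<le> x powr (2*H)" by simp
  ultimately have "0 \<le> x powr (2*H) + 1 - (1 - x) powr (2*H)" by linarith
  then show "0 \<le> (x powr (2*H) + 1 - (1 - x) powr (2*H)) / 2" by simp
next
  show "(x powr (2*H) + 1 - (1 - x) powr (2*H)) / 2 \<le> 2 * x powr (H + min H (1 - H))"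
  proof (cases "H \<le> 1/2")
    case True
    have "(x + (1 - x)) powr (2*H) \<le> x powr (2*H) + (1-x) powr (2*H)"
      using True H x by (intro powr_subadd) auto
    then have "1 \<le> x powr (2*H) + (1-x) powr (2*H)" by simp
    moreover have e: "x powr (H + min H (1 - H)) = x powr (2*H)" using True by (simp add: min_def)
    moreover have "0 \<le> x powr (2*H)" by simp
    ultimately have "x powr (2*H) + 1 - (1 - x) powr (2*H) \<le> 4 * x powr (2*H)" by linarith
    then have "(x powr (2*H) + 1 - (1 - x) powr (2*H)) / 2 \<le> 2 * x powr (2*H)" by simp
    then show ?thesis using e by simp
  next
    case False
    have "1 + 2*H * ((1 - x) - 1) \<le> (1 - x) powr (2*H)"
      using False x by (intro powr_conv_bern) auto
    then have "1 - 2*H*x \<le> (1 - x) powr (2*H)" by (simp add: algebra_simps)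
    moreover have "x powr (2*H) \<le> x powr 1" using False x by (intro powr_mono') auto
    then have "x powr (2*H) \<le> x" using x by simp
    moreover have e: "x powr (H + min H (1 - H)) = x" using False x by (simp add: min_def)
    moreover have "2*H*x \<le> 2 * x" using H x by (simp add: mult_right_mono)
    ultimately have "x powr (2*H) + 1 - (1 - x) powr (2*H) \<le> 4 * x" using x by linarith
    then have "(x powr (2*H) + 1 - (1 - x) powr (2*H)) / 2 \<le> 2 * x" by simp
    then show ?thesis using e by simp
  qed
qed

lemma powr_sum_bound:
  fixes g :: real assumes "0 < g" "g \<le> 1"
  shows "(\<Sum>j=1..n. real j powr (g - 1)) \<le> real n powr g / g"
proof (induction n)
  case 0 then show ?case by simp
next
  case (Suc n)
  have step: "real (Suc n) powr (g - 1) \<le> (real (Suc n) powr g - real n powr g) / g"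
  proof (cases "n = 0")
    case True then show ?thesis using assms by simp
  next
    case False
    define s where "s = real n / real (Suc n)"
    have sp: "0 < s" using False s_def by simp
    have "s powr g \<le> g * s + (1 - g)" using powr_conc_bern[of g s] assms sp by simp
    then have "g * (1 - s) \<le> 1 - s powr g" by (simp add: algebra_simps)
    then have "g * (1 - s) * real (Suc n) powr g \<le> (1 - s powr g) * real (Suc n) powr g"
      by (intro mult_right_mono) auto
    moreover have "(1 - s) * real (Suc n) powr g = real (Suc n) powr (g - 1)"
    proof -
      have "1 - s = 1 / real (Suc n)" unfolding s_def by (simp add: field_simps)
      then show ?thesis by (simp add: powr_diff divide_simps)
    qed
    moreover have "s powr g * real (Suc n) powr g = real n powr g"
      unfolding s_def by (simp add: powr_divide)
    ultimately have "g * real (Suc n) powr (g - 1) \<le> real (Suc n) powr g - real n powr g"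
      by (metis (no_types, opaque_lifting) left_diff_distrib mult.assoc mult_1)
    then show ?thesis using assms by (simp add: le_divide_eq algebra_simps)
  qed
  have "(\<Sum>j=1..Suc n. real j powr (g - 1)) = (\<Sum>j=1..n. real j powr (g - 1)) + real (Suc n) powr (g - 1)"
    by simp
  also have "\<dots> \<le> real n powr g / g + (real (Suc n) powr g - real n powr g) / g"
    using Suc step by linarith
  also have "\<dots> = real (Suc n) powr g / g" by (simp add: diff_divide_distrib)
  finally show ?case .
qed



definition fbmK :: "real \<Rightarrow> real \<Rightarrow> real \<Rightarrow> real" where
  "fbmK H t s = (t powr (2*H) + s powr (2*H) - \<bar>t - s\<bar> powr (2*H)) / 2"

lemma fbmK_sym: "fbmK H t s = fbmK H s t"
  unfolding fbmK_def by (simp add: abs_minus_commute add.commute)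

lemma corr_bound_real:
  fixes H j k :: real assumes H: "0 < H" "H < 1" and jk: "0 < j" "j \<le> k"
  shows "0 \<le> fbmK H j k / (j powr H * k powr H)"
    and "fbmK H j k / (j powr H * k powr H) \<le> 2 * (j / k) powr (min H (1 - H))"
proof -
  define x where "x = j / k"
  have kp: "0 < k" using jk by simp
  have x: "0 < x" "x \<le> 1" using jk kp by (auto simp: x_def)
  have jx: "j = x * k" using kp by (simp add: x_def)
  have e1: "j powr (2*H) = x powr (2*H) * k powr (2*H)" using x kp by (simp add: jx powr_mult)
  have e2: "\<bar>j - k\<bar> powr (2*H) = (1 - x) powr (2*H) * k powr (2*H)"
  proof -
    have "\<bar>j - k\<bar> = (1 - x) * k" using x kp jk by (simp add: jx algebra_simps)
    then show ?thesis using x kp by (simp add: powr_mult)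
  qed
  have e3: "j powr H * k powr H = x powr H * k powr (2*H)"
    using x kp by (simp add: jx powr_mult powr_add[symmetric])
  define f where "f = (x powr (2*H) + 1 - (1 - x) powr (2*H)) / 2"
  have fK: "fbmK H j k = f * k powr (2*H)"
    unfolding fbmK_def f_def e1 e2 by (simp add: algebra_simps)
  have ratio: "fbmK H j k / (j powr H * k powr H) = f / x powr H"
    using kp x unfolding fK e3 by simp
  show "0 \<le> fbmK H j k / (j powr H * k powr H)"
    unfolding ratio f_def using corr_norm_bound(1)[OF H x] by simp
  have "f / x powr H \<le> 2 * x powr (H + min H (1 - H)) / x powr H"
    using corr_norm_bound(2)[OF H x] x unfolding f_def by (intro divide_right_mono) auto
  also have "\<dots> = 2 * x powr (min H (1 - H))" using x by (simp add: powr_add)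
  finally show "fbmK H j k / (j powr H * k powr H) \<le> 2 * (j / k) powr (min H (1 - H))"
    unfolding ratio x_def .
qed

definition rho :: "real \<Rightarrow> nat \<Rightarrow> nat \<Rightarrow> real" where
  "rho g j k = (real (min j k) / real (max j k)) powr g"

lemma rho_nonneg: "0 \<le> rho g j k" by (simp add: rho_def)

lemma corr_bound_nat:
  fixes H :: real and j k :: nat assumes H: "0 < H" "H < 1" and jk: "1 \<le> j" "1 \<le> k"
  shows "0 \<le> fbmK H j k / (real j powr H * real k powr H)"
    and "fbmK H j k / (real j powr H * real k powr H) \<le> 2 * rho (min H (1 - H)) j k"
proof -
  have "0 \<le> fbmK H j k / (real j powr H * real k powr H) \<and>
        fbmK H j k / (real j powr H * real k powr H) \<le> 2 * rho (min H (1 - H)) j k"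
  proof (cases "j \<le> k")
    case True
    then show ?thesis using corr_bound_real[OF H, of "real j" "real k"] jk
      by (simp add: rho_def min_def max_def)
  next
    case False
    then have "fbmK H j k / (real j powr H * real k powr H) = fbmK H k j / (real k powr H * real j powr H)"
      by (simp add: fbmK_sym mult.commute)
    then show ?thesis using corr_bound_real[OF H, of "real k" "real j"] jk False
      by (simp add: rho_def min_def max_def)
  qed
  then show "0 \<le> fbmK H j k / (real j powr H * real k powr H)"
    and "fbmK H j k / (real j powr H * real k powr H) \<le> 2 * rho (min H (1 - H)) j k" by auto
qed

lemma rho_le1: "0 \<le> g \<Longrightarrow> rho g j k \<le> 1"
  unfolding rho_def by (intro powr_le1) (auto simp: divide_le_eq_1)

lemma double_sum_rho:
  fixes g :: real assumes g: "0 < g" "g \<le> 1"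
  shows "(\<Sum>j=1..n. \<Sum>k=1..n. rho g j k / (real j * real k)) \<le> 2 / g * harm n"
proof -
  define G where "G j k = (if j \<le> k then rho g j k / (real j * real k) else 0)" for j k
  have G0: "0 \<le> G j k" for j k by (simp add: G_def rho_nonneg)
  have pt: "rho g j k / (real j * real k) \<le> G j k + G k j" for j k
  proof (cases "j \<le> k")
    case True then show ?thesis using G0[of k j] by (simp add: G_def)
  next
    case False
    have "rho g j k = rho g k j" by (simp add: rho_def min.commute max.commute)
    then show ?thesis using False G0[of j k] by (simp add: G_def mult.commute)
  qed
  have inner: "(\<Sum>j=1..n. G j k) \<le> 1 / (g * real k)" if k: "k \<in> {1..n}" for k
  proof -
    have "(\<Sum>j=1..n. G j k) = (\<Sum>j=1..k. rho g j k / (real j * real k))"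
      using k by (intro sum.mono_neutral_cong_right) (auto simp: G_def)
    also have "\<dots> = (\<Sum>j=1..k. real j powr (g - 1) * real k powr (- g - 1))"
    proof (intro sum.cong refl)
      fix j assume j: "j \<in> {1..k}"
      have "rho g j k = real j powr g / real k powr g" using j by (simp add: rho_def powr_divide)
      then show "rho g j k / (real j * real k) = real j powr (g - 1) * real k powr (- g - 1)"
        using j k by (simp add: powr_diff powr_add divide_simps powr_minus)
    qed
    also have "\<dots> = (\<Sum>j=1..k. real j powr (g - 1)) * real k powr (- g - 1)"
      by (simp add: sum_distrib_right)
    also have "\<dots> \<le> (real k powr g / g) * real k powr (- g - 1)"
      by (intro mult_right_mono powr_sum_bound g) simp
    also have "\<dots> = 1 / (g * real k)"
      using k g by (simp add: powr_add[symmetric] powr_minus divide_simps)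
    finally show ?thesis .
  qed
  have A: "(\<Sum>j=1..n. \<Sum>k=1..n. rho g j k / (real j * real k)) \<le> (\<Sum>j=1..n. \<Sum>k=1..n. G j k + G k j)"
    by (intro sum_mono pt)
  have B: "(\<Sum>j=1..n. \<Sum>k=1..n. G j k + G k j) = (\<Sum>j=1..n. \<Sum>k=1..n. G j k) + (\<Sum>j=1..n. \<Sum>k=1..n. G k j)"
    by (simp add: sum.distrib)
  have C: "(\<Sum>j=1..n. \<Sum>k=1..n. G j k) = (\<Sum>k=1..n. \<Sum>j=1..n. G j k)"
    by (rule sum.swap)
  have D: "(\<Sum>k=1..n. \<Sum>j=1..n. G j k) \<le> (\<Sum>k=1..n. 1 / (g * real k))"
    by (intro sum_mono inner)
  have E: "(\<Sum>j=1..n. \<Sum>k=1..n. G k j) \<le> (\<Sum>k=1..n. 1 / (g * real k))"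
    by (intro sum_mono inner)
  have F: "(\<Sum>k=1..n. 1 / (g * real k)) = harm n / g"
    by (simp add: harm_def sum_divide_distrib divide_simps mult.commute)
  have "(\<Sum>j=1..n. \<Sum>k=1..n. rho g j k / (real j * real k)) \<le> 2 * (harm n / g)"
    using A B C D E F by linarith
  then show ?thesis by simp
qed



lemma (in prob_space) var_weighted_sum:
  fixes Y :: "nat \<Rightarrow> 'a \<Rightarrow> real" and w :: "nat \<Rightarrow> real"
  assumes fin: "finite A"
  and int2: "\<And>j k. j \<in> A \<Longrightarrow> k \<in> A \<Longrightarrow> integrable M (\<lambda>\<omega>. Y j \<omega> * Y k \<omega>)"
  and int1: "\<And>k. k \<in> A \<Longrightarrow> integrable M (Y k)"
  and mean: "\<And>k. k \<in> A \<Longrightarrow> expectation (Y k) = c"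
  shows "integrable M (\<lambda>\<omega>. (\<Sum>k\<in>A. w k * (Y k \<omega> - c))^2)"
    and "expectation (\<lambda>\<omega>. (\<Sum>k\<in>A. w k * (Y k \<omega> - c))^2)
           = (\<Sum>j\<in>A. \<Sum>k\<in>A. w j * w k * (expectation (\<lambda>\<omega>. Y j \<omega> * Y k \<omega>) - c^2))"
proof -
  have sq: "(\<Sum>k\<in>A. w k * (Y k \<omega> - c))^2 = (\<Sum>j\<in>A. \<Sum>k\<in>A. w j * w k * (Y j \<omega> * Y k \<omega> - c * Y j \<omega> - c * Y k \<omega> + c^2))" for \<omega>
    unfolding power2_eq_square sum_product by (intro sum.cong refl) (simp add: algebra_simps power2_eq_square)
  have intt: "integrable M (\<lambda>\<omega>. w j * w k * (Y j \<omega> * Y k \<omega> - c * Y j \<omega> - c * Y k \<omega> + c^2))"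
    if "j \<in> A" "k \<in> A" for j k
    using int2[OF that] int1[OF that(1)] int1[OF that(2)] by auto
  show "integrable M (\<lambda>\<omega>. (\<Sum>k\<in>A. w k * (Y k \<omega> - c))^2)"
    unfolding sq by (intro Bochner_Integration.integrable_sum intt)
  have "expectation (\<lambda>\<omega>. (\<Sum>k\<in>A. w k * (Y k \<omega> - c))^2)
      = (\<Sum>j\<in>A. \<Sum>k\<in>A. expectation (\<lambda>\<omega>. w j * w k * (Y j \<omega> * Y k \<omega> - c * Y j \<omega> - c * Y k \<omega> + c^2)))"
    unfolding sq
    apply (subst Bochner_Integration.integral_sum)
     apply (rule Bochner_Integration.integrable_sum, rule intt, assumption, assumption)
    apply (rule sum.cong[OF refl])
    apply (rule Bochner_Integration.integral_sum)
    apply (rule intt, assumption, assumption)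
    done
  also have "\<dots> = (\<Sum>j\<in>A. \<Sum>k\<in>A. w j * w k * (expectation (\<lambda>\<omega>. Y j \<omega> * Y k \<omega>) - c^2))"
  proof (intro sum.cong refl)
    fix j k assume jk: "j \<in> A" "k \<in> A"
    have "expectation (\<lambda>\<omega>. w j * w k * (Y j \<omega> * Y k \<omega> - c * Y j \<omega> - c * Y k \<omega> + c^2))
      = w j * w k * (expectation (\<lambda>\<omega>. Y j \<omega> * Y k \<omega>) - c * expectation (Y j) - c * expectation (Y k) + c^2)"
      using int2[OF jk] int1[OF jk(1)] int1[OF jk(2)] by (simp add: prob_space)
    then show "expectation (\<lambda>\<omega>. w j * w k * (Y j \<omega> * Y k \<omega> - c * Y j \<omega> - c * Y k \<omega> + c^2))
      = w j * w k * (expectation (\<lambda>\<omega>. Y j \<omega> * Y k \<omega>) - c^2)"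
      using mean[OF jk(1)] mean[OF jk(2)] by (simp add: power2_eq_square)
  qed
  finally show "expectation (\<lambda>\<omega>. (\<Sum>k\<in>A. w k * (Y k \<omega> - c))^2)
           = (\<Sum>j\<in>A. \<Sum>k\<in>A. w j * w k * (expectation (\<lambda>\<omega>. Y j \<omega> * Y k \<omega>) - c^2))" .
qed

lemma interp_lemma:
  fixes T :: "nat \<Rightarrow> real" and s :: "nat \<Rightarrow> nat"
  assumes mono: "\<And>n. T n \<le> T (Suc n)" and T0: "\<And>n. 0 \<le> T n"
  and smono: "strict_mono s" and s0: "2 \<le> s 0"
  and ratio: "(\<lambda>m. ln (real (s (Suc m))) / ln (real (s m))) \<longlonglongrightarrow> 1"
  and conv: "(\<lambda>m. T (s m) / ln (real (s m))) \<longlonglongrightarrow> c"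
  shows "(\<lambda>n. T n / ln (real n)) \<longlonglongrightarrow> c"
proof -
  have Tmono: "T a \<le> T b" if "a \<le> b" for a b
    using that by (induction rule: dec_induct) (auto intro: order_trans mono)
  have sge: "m \<le> s m" for m using strict_mono_imp_increasing[OF smono] by simp
  have s2: "2 \<le> s m" for m using s0 strict_mono_less_eq[OF smono, of 0 m] by simp
  have lnpos: "0 < ln (real (s m))" for m using s2[of m] by simp
  define idx where "idx n = (LEAST m. n < s (Suc m))" for n
  have ex: "n < s (Suc n)" for n using sge[of "Suc n"] by simp
  have up: "n < s (Suc (idx n))" for n unfolding idx_def by (rule LeastI[of "\<lambda>m. n < s (Suc m)" n, OF ex])
  have lo: "s (idx n) \<le> n" if "s 0 \<le> n" for n
  proof (cases "idx n")
    case 0 then show ?thesis using that by simp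
  next
    case (Suc m)
    have "\<not> n < s (Suc m)" using not_less_Least[of m "\<lambda>m. n < s (Suc m)"] Suc unfolding idx_def by simp
    then show ?thesis using Suc by simp
  qed
  have idx_lim: "filterlim idx at_top sequentially"
    unfolding filterlim_at_top
  proof
    fix Z
    show "eventually (\<lambda>n. Z \<le> idx n) sequentially"
      unfolding eventually_sequentially
    proof (intro exI allI impI)
      fix n assume n: "s (Suc Z) \<le> n"
      show "Z \<le> idx n"
      proof (rule ccontr)
        assume "\<not> Z \<le> idx n"
        then have "Suc (idx n) \<le> Z" by simp
        then have "s (Suc (idx n)) \<le> s Z" using strict_mono_less_eq[OF smono] by simp
        also have "s Z < s (Suc Z)" using smono by (simp add: strict_mono_def)
        finally show False using n up[of n] by simp
      qed
    qed
  qed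
  define lo_s where "lo_s m = T (s m) / ln (real (s m)) * (1 / (ln (real (s (Suc m))) / ln (real (s m))))" for m
  define hi_s where "hi_s m = T (s (Suc m)) / ln (real (s (Suc m))) * (ln (real (s (Suc m))) / ln (real (s m)))" for m
  have "lo_s \<longlonglongrightarrow> c * (1 / 1)" unfolding lo_s_def
    by (intro tendsto_mult conv tendsto_divide ratio tendsto_const) auto
  then have lo_lim: "(\<lambda>n. lo_s (idx n)) \<longlonglongrightarrow> c" using filterlim_compose[OF _ idx_lim] by simp
  have "hi_s \<longlonglongrightarrow> c * 1" unfolding hi_s_def
    by (intro tendsto_mult ratio LIMSEQ_Suc[OF conv])
  then have hi_lim: "(\<lambda>n. hi_s (idx n)) \<longlonglongrightarrow> c" using filterlim_compose[OF _ idx_lim] by simp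
  show ?thesis
  proof (rule tendsto_sandwich[OF _ _ lo_lim hi_lim])
    show "eventually (\<lambda>n. lo_s (idx n) \<le> T n / ln (real n)) sequentially"
      unfolding eventually_sequentially
    proof (intro exI allI impI)
      fix n assume n: "s 0 \<le> n"
      define m where "m = idx n"
      have a: "s m \<le> n" "n < s (Suc m)" using lo[OF n] up[of n] by (auto simp: m_def)
      have lnn: "0 < ln (real n)" using a(1) s2[of m] by simp
      have eqlo: "lo_s m = T (s m) / ln (real (s (Suc m)))"
        unfolding lo_s_def using lnpos[of m] lnpos[of "Suc m"] by (simp add: field_simps)
      have "ln (real n) \<le> ln (real (s (Suc m)))" using a s2[of m] by (subst ln_le_cancel_iff) auto
      then have "T (s m) / ln (real (s (Suc m))) \<le> T (s m) / ln (real n)"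
        using lnn T0[of "s m"] by (intro divide_left_mono) auto
      also have "\<dots> \<le> T n / ln (real n)"
        using a lnn Tmono[of "s m" n] by (intro divide_right_mono) auto
      finally show "lo_s (idx n) \<le> T n / ln (real n)" using eqlo by (simp add: m_def)
    qed
    show "eventually (\<lambda>n. T n / ln (real n) \<le> hi_s (idx n)) sequentially"
      unfolding eventually_sequentially
    proof (intro exI allI impI)
      fix n assume n: "s 0 \<le> n"
      define m where "m = idx n"
      have a: "s m \<le> n" "n < s (Suc m)" using lo[OF n] up[of n] by (auto simp: m_def)
      have lnn: "0 < ln (real n)" using a(1) s2[of m] by simp
      have "T n / ln (real n) \<le> T (s (Suc m)) / ln (real n)"
        using a lnn Tmono[of n "s (Suc m)"] by (intro divide_right_mono) auto
      also have "\<dots> \<le> T (s (Suc m)) / ln (real (s m))"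
        using a lnn lnpos[of m] T0[of "s (Suc m)"] s2[of m] by (intro divide_left_mono) auto
      also have "\<dots> = hi_s m"
        unfolding hi_s_def using lnpos[of m] lnpos[of "Suc m"] by (simp add: field_simps)
      finally show "T n / ln (real n) \<le> hi_s (idx n)" by (simp add: m_def)
    qed
  qed
qed



lemma harm_over_ln: "(\<lambda>n. harm n / ln (real n) :: real) \<longlonglongrightarrow> 1"
proof -
  have lnat: "filterlim (\<lambda>n. ln (real n)) at_top sequentially" by real_asymp
  have "(\<lambda>n. (harm n - ln (real n)) / ln (real n) :: real) \<longlonglongrightarrow> 0"
    by (rule tendsto_divide_0[OF euler_mascheroni_LIMSEQ filterlim_at_top_imp_at_infinity[OF lnat]])
  then have "(\<lambda>n. (harm n - ln (real n)) / ln (real n) + 1 :: real) \<longlonglongrightarrow> 0 + 1"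
    by (intro tendsto_add tendsto_const)
  moreover have "eventually (\<lambda>n. (harm n - ln (real n)) / ln (real n) + 1 = harm n / ln (real n)) sequentially"
    using eventually_gt_at_top[of "1::nat"]
    by eventually_elim (simp add: field_simps)
  ultimately show ?thesis by (simp add: tendsto_cong)
qed

lemma harm_le_ln1: "1 \<le> n \<Longrightarrow> harm n \<le> ln (real n) + (1::real)"
  using euler_mascheroni_sequence_decreasing[of 1 n] by (simp add: harm_def)

lemma (in prob_space) asclt_generic:
  fixes Y :: "nat \<Rightarrow> 'a \<Rightarrow> real" and c C g :: real
  assumes meas: "\<And>k. Y k \<in> borel_measurable M"
  and nonneg: "\<And>k \<omega>. 1 \<le> k \<Longrightarrow> \<omega> \<in> space M \<Longrightarrow> 0 \<le> Y k \<omega>"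
  and int2: "\<And>j k. 1 \<le> j \<Longrightarrow> 1 \<le> k \<Longrightarrow> integrable M (\<lambda>\<omega>. Y j \<omega> * Y k \<omega>)"
  and int1: "\<And>k. 1 \<le> k \<Longrightarrow> integrable M (Y k)"
  and mean: "\<And>k. 1 \<le> k \<Longrightarrow> expectation (Y k) = c"
  and cov: "\<And>j k. 1 \<le> j \<Longrightarrow> 1 \<le> k \<Longrightarrow> \<bar>expectation (\<lambda>\<omega>. Y j \<omega> * Y k \<omega>) - c^2\<bar> \<le> C * rho g j k"
  and g: "0 < g" "g \<le> 1" and C: "0 \<le> C"
  shows "AE \<omega> in M. (\<lambda>n. (1 / ln (real n)) * (\<Sum>k=1..n. (1 / real k) * Y k \<omega>)) \<longlonglongrightarrow> c"
proof -
  define T where "T n \<omega> = (\<Sum>k=1..n. (1 / real k) * Y k \<omega>)" for n \<omega>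
  define s where "s m = (2::nat) ^ ((m+1)^4)" for m
  define L where "L m = ln (real (s m))" for m
  have L_eq: "L m = real ((m+1)^4) * ln 2" for m
    unfolding L_def s_def by (simp add: ln_realpow)
  have Lge: "1/2 \<le> L m" for m
  proof -
    have "1 \<le> real ((m+1)^4)" by simp
    then have "1 * ln 2 \<le> real ((m+1)^4) * ln (2::real)" by (intro mult_right_mono) auto
    then have "ln 2 \<le> L m" using L_eq[of m] by simp
    then show ?thesis using ln2_ge_two_thirds by linarith
  qed
  have Tmeas: "T n \<in> borel_measurable M" for n unfolding T_def using meas by measurable
  have Tdiff: "T n \<omega> - c * harm n = (\<Sum>k\<in>{1..n}. (1 / real k) * (Y k \<omega> - c))" for n \<omega>
    unfolding T_def harm_def by (simp add: sum_subtractf sum_distrib_left algebra_simps divide_inverse)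
  have var: "integrable M (\<lambda>\<omega>. (T n \<omega> - c * harm n)^2) \<and>
             expectation (\<lambda>\<omega>. (T n \<omega> - c * harm n)^2) \<le> 2 * C / g * harm n" for n
  proof -
    have vw1: "integrable M (\<lambda>\<omega>. (\<Sum>k\<in>{1..n}. (1 / real k) * (Y k \<omega> - c))^2)"
      by (rule var_weighted_sum(1)) (auto intro: int2 int1 mean)
    have vw2: "expectation (\<lambda>\<omega>. (\<Sum>k\<in>{1..n}. (1 / real k) * (Y k \<omega> - c))^2)
       = (\<Sum>j\<in>{1..n}. \<Sum>k\<in>{1..n}. (1 / real j) * (1 / real k) * (expectation (\<lambda>\<omega>. Y j \<omega> * Y k \<omega>) - c^2))"
      by (rule var_weighted_sum(2)) (auto intro: int2 int1 mean)
    also have "\<dots> \<le> (\<Sum>j\<in>{1..n}. \<Sum>k\<in>{1..n}. C * (rho g j k / (real j * real k)))"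
    proof (intro sum_mono)
      fix j k assume jk: "j \<in> {1..n}" "k \<in> {1..n}"
      have "(1 / real j) * (1 / real k) * (expectation (\<lambda>\<omega>. Y j \<omega> * Y k \<omega>) - c^2)
            \<le> (1 / real j) * (1 / real k) * (C * rho g j k)"
        using cov[of j k] jk by (intro mult_left_mono) auto
      then show "(1 / real j) * (1 / real k) * (expectation (\<lambda>\<omega>. Y j \<omega> * Y k \<omega>) - c^2)
            \<le> C * (rho g j k / (real j * real k))" by (simp add: field_simps)
    qed
    also have "\<dots> = C * (\<Sum>j=1..n. \<Sum>k=1..n. rho g j k / (real j * real k))"
      by (simp add: sum_distrib_left)
    also have "\<dots> \<le> C * (2 / g * harm n)"
      using double_sum_rho[OF g, of n] C by (intro mult_left_mono) auto
    also have "C * (2 / g * harm n) = 2 * C / g * harm n" by simp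
    finally show ?thesis using vw1 unfolding Tdiff by simp
  qed
  define A where "A m = {\<omega>\<in>space M. L m / real (m+1) \<le> \<bar>T (s m) \<omega> - c * harm (s m)\<bar>}" for m
  have Ameas: "A m \<in> events" for m unfolding A_def using Tmeas by measurable
  define K where "K = 6 * C / (g * ln 2)"
  have PA: "prob (A m) \<le> K / real (m+1)^2" for m
  proof -
    define f where "f \<omega> = T (s m) \<omega> - c * harm (s m)" for \<omega>
    have fm: "random_variable borel f" unfolding f_def using Tmeas by measurable
    have f2: "integrable M (\<lambda>x. f x ^ 2)" using var[of "s m"] by (simp add: f_def)
    have f1: "integrable M f" using f2 fm square_integrable_imp_integrable by blast
    have apos: "0 < L m / real (m+1)" using Lge[of m] by simp
    have Ef: "expectation f = 0"
    proof -
      have "expectation f = expectation (\<lambda>\<omega>. \<Sum>k\<in>{1..s m}. (1 / real k) * (Y k \<omega> - c))"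
        unfolding f_def Tdiff ..
      also have "\<dots> = (\<Sum>k\<in>{1..s m}. expectation (\<lambda>\<omega>. (1 / real k) * (Y k \<omega> - c)))"
        by (rule Bochner_Integration.integral_sum) (use int1 in auto)
      also have "\<dots> = 0" using int1 mean by (intro sum.neutral) (auto simp: prob_space)
      finally show ?thesis .
    qed
    have "prob (A m) = prob {x\<in>space M. L m / real (m+1) \<le> \<bar>f x - expectation f\<bar>}"
      unfolding A_def Ef f_def by simp
    also have "\<dots> \<le> variance f / (L m / real (m+1))^2"
      by (rule Chebyshev_inequality[OF fm f2 apos])
    also have "variance f = expectation (\<lambda>\<omega>. (T (s m) \<omega> - c * harm (s m))^2)"
      unfolding Ef f_def by simp
    also have "\<dots> \<le> 2 * C / g * harm (s m)" using var by blast
    also have "harm (s m) \<le> L m + 1" unfolding L_def by (intro harm_le_ln1) (simp add: s_def)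
    also have "\<dots> \<le> 3 * L m" using Lge[of m] by simp
    finally have "prob (A m) \<le> (2 * C / g * (3 * L m)) / (L m / real (m+1))^2"
      using C g by (simp add: divide_right_mono mult_left_mono)
    also have "\<dots> = 6 * C / g * real (m+1)^2 / L m"
    proof -
      have "L m \<noteq> 0" using Lge[of m] by linarith
      then show ?thesis using g by (simp add: field_simps power2_eq_square)
    qed
    also have "\<dots> = K / real (m+1)^2"
    proof -
      define x where "x = real (m+1)"
      have x: "x \<noteq> 0" by (simp add: x_def)
      have "real ((m+1)^4) = x^2 * x^2" by (simp add: x_def flip: power_add)
      then show ?thesis unfolding K_def L_eq using g x
        by (simp add: field_simps flip: x_def)
    qed
    finally show ?thesis .
  qed
  have summ: "summable (\<lambda>m. measure M (A m))"
  proof (rule summable_comparison_test')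
    have "summable (\<lambda>m. inverse (real m ^ 2))" by (rule inverse_power_summable) simp
    then have "summable (\<lambda>m. inverse (real (Suc m) ^ 2))" by (subst summable_Suc_iff)
    then show "summable (\<lambda>m. K / real (m+1)^2)"
      using summable_mult[of "\<lambda>m. inverse (real (Suc m) ^ 2)" K] by (simp add: divide_inverse)
    show "norm (measure M (A m)) \<le> K / real (m+1)^2" for m using PA[of m] by simp
  qed
  have BC: "AE \<omega> in M. eventually (\<lambda>m. \<omega> \<in> space M - A m) sequentially"
    by (rule borel_cantelli_AE1[OF Ameas]) (auto simp: summ less_top[symmetric])
  have slim: "filterlim s at_top sequentially"
  proof -
    have "m \<le> s m" for m
    proof -
      have "m < 2 ^ m" by (rule less_exp)
      also have "(2::nat) ^ m \<le> 2 ^ ((m+1)^4)"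
      proof (intro power_increasing)
        have "m \<le> (m+1)" by simp
        also have "m + 1 \<le> (m+1)^4" by (simp add: self_le_power)
        finally show "m \<le> (m+1)^4" .
      qed simp
      finally show ?thesis by (simp add: s_def)
    qed
    then show ?thesis by (intro filterlim_at_top_mono[OF filterlim_ident]) auto
  qed
  have harmL: "(\<lambda>m. harm (s m) / L m) \<longlonglongrightarrow> 1"
    unfolding L_def by (rule filterlim_compose[OF harm_over_ln slim])
  have smono: "strict_mono s"
    unfolding strict_mono_def s_def
    by (intro allI impI power_strict_increasing) (auto intro: power_strict_mono)
  have ratio: "(\<lambda>m. ln (real (s (Suc m))) / ln (real (s m))) \<longlonglongrightarrow> 1"
  proof -
    have "(\<lambda>m::nat. real ((m+2)^4) / real ((m+1)^4)) \<longlonglongrightarrow> 1" by real_asymp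
    moreover have "ln (real (s (Suc m))) / ln (real (s m)) = real ((m+2)^4) / real ((m+1)^4)" for m
      using L_eq[of m] L_eq[of "Suc m"] unfolding L_def by simp
    ultimately show ?thesis by simp
  qed
  show ?thesis
    using AE_space BC
  proof eventually_elim
    case (elim \<omega>)
    then have \<omega>: "\<omega> \<in> space M" and ev: "eventually (\<lambda>m. \<omega> \<in> space M - A m) sequentially" by auto
    have small: "(\<lambda>m. (T (s m) \<omega> - c * harm (s m)) / L m) \<longlonglongrightarrow> 0"
    proof (rule Lim_null_comparison)
      show "eventually (\<lambda>m. norm ((T (s m) \<omega> - c * harm (s m)) / L m) \<le> 1 / real (m+1)) sequentially"
        using ev
      proof eventually_elim
        case (elim m)
        then have "\<bar>T (s m) \<omega> - c * harm (s m)\<bar> < L m / real (m+1)" using \<omega> unfolding A_def by auto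
        then show ?case using Lge[of m] by (simp add: field_simps)
      qed
      show "(\<lambda>m. 1 / real (m+1)) \<longlonglongrightarrow> 0" by real_asymp
    qed
    have conv: "(\<lambda>m. T (s m) \<omega> / ln (real (s m))) \<longlonglongrightarrow> c"
    proof -
      have "(\<lambda>m. (T (s m) \<omega> - c * harm (s m)) / L m + c * (harm (s m) / L m)) \<longlonglongrightarrow> 0 + c * 1"
        by (intro tendsto_add small tendsto_mult tendsto_const harmL)
      moreover have "(T (s m) \<omega> - c * harm (s m)) / L m + c * (harm (s m) / L m) = T (s m) \<omega> / ln (real (s m))" for m
        using Lge[of m] unfolding L_def by (simp add: field_simps)
      ultimately show ?thesis by simp
    qed
    have "(\<lambda>n. T n \<omega> / ln (real n)) \<longlonglongrightarrow> c"
    proof (rule interp_lemma[OF _ _ smono _ ratio conv])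
      show "T n \<omega> \<le> T (Suc n) \<omega>" for n
        unfolding T_def using nonneg[of "Suc n" \<omega>] \<omega> by simp
      show "0 \<le> T n \<omega>" for n
        unfolding T_def using nonneg \<omega> by (intro sum_nonneg) auto
      show "2 \<le> s 0" by (simp add: s_def)
    qed
    then show "(\<lambda>n. (1 / ln (real n)) * (\<Sum>k=1..n. (1 / real k) * Y k \<omega>)) \<longlonglongrightarrow> c"
      unfolding T_def by simp
  qed
qed



lemma std_normal_facts:
  fixes M :: "'a measure" and W :: "'a \<Rightarrow> real"
  assumes D: "distributed M lborel W std_normal_density"
  shows "integral\<^sup>L M (\<lambda>x. cos (t * W x)) = exp (- (t^2) / 2)"
    and "integral\<^sup>L M (\<lambda>x. sin (t * W x)) = 0"
    and "integral\<^sup>L M (\<lambda>x. W x ^ 2) = 1"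
    and "integral\<^sup>L M (\<lambda>x. W x ^ 4) = 3"
    and "integrable M (\<lambda>x. W x ^ 2)"
    and "integrable M (\<lambda>x. W x ^ 4)"
proof -
  have int_tr: "integral\<^sup>L M (\<lambda>x. g (W x)) = integral\<^sup>L std_normal_distribution g"
    if [measurable]: "g \<in> borel_measurable borel" for g :: "real \<Rightarrow> real"
  proof -
    have "integral\<^sup>L M (\<lambda>x. g (W x)) = (\<integral>x. std_normal_density x * g x \<partial>lborel)"
      by (rule distributed_integral[OF D, symmetric]) auto
    also have "\<dots> = integral\<^sup>L std_normal_distribution g"
      by (subst integral_density) auto
    finally show ?thesis .
  qed
  have ch: "char std_normal_distribution t = complex_of_real (exp (- (t^2) / 2))"
    by (simp add: char_std_normal_distribution)
  interpret N: real_distribution std_normal_distribution by (rule real_dist_normal_dist)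
  have iint: "complex_integrable std_normal_distribution (\<lambda>x. iexp (t * x))"
    using N.integrable_iexp[of "\<lambda>x. complex_of_real (t * x)"] by simp
  have re: "(\<lambda>x. cos (t * x)) = (\<lambda>x. Re (iexp (t * x)))" by (simp add: Re_exp)
  have im: "(\<lambda>x. sin (t * x)) = (\<lambda>x. Im (iexp (t * x)))" by (simp add: Im_exp)
  have "integral\<^sup>L std_normal_distribution (\<lambda>x. cos (t * x)) = Re (char std_normal_distribution t)"
    unfolding char_def re by (rule integral_Re[OF iint])
  then show "integral\<^sup>L M (\<lambda>x. cos (t * W x)) = exp (- (t^2) / 2)"
    using int_tr[of "\<lambda>x. cos (t * x)"] ch by simp
  have "integral\<^sup>L std_normal_distribution (\<lambda>x. sin (t * x)) = Im (char std_normal_distribution t)"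
    unfolding char_def im by (rule integral_Im[OF iint])
  then show "integral\<^sup>L M (\<lambda>x. sin (t * W x)) = 0"
    using int_tr[of "\<lambda>x. sin (t * x)"] ch by simp
  show "integral\<^sup>L M (\<lambda>x. W x ^ 2) = 1"
    using int_tr[of "\<lambda>x. x ^ (2 * 1)"] std_normal_distribution_even_moments(1)[of 1] by simp
  show "integral\<^sup>L M (\<lambda>x. W x ^ 4) = 3"
    using int_tr[of "\<lambda>x. x ^ (2 * 2)"] std_normal_distribution_even_moments(1)[of 2]
    by (simp add: fact_numeral)
  show "integrable M (\<lambda>x. W x ^ 2)"
    using distributed_integrable[OF D, of "\<lambda>x. x ^ 2"] integrable_std_normal_moment[of 2] by simp
  show "integrable M (\<lambda>x. W x ^ 4)"
    using distributed_integrable[OF D, of "\<lambda>x. x ^ 4"] integrable_std_normal_moment[of 4] by simp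
qed

lemma gauss_facts:
  fixes M :: "'a measure" and Z :: "'a \<Rightarrow> real"
  assumes P: "prob_space M" and G: "gaussian_rv M Z" and I: "integrable M Z"
    and E0: "integral\<^sup>L M Z = 0"
  shows "integrable M (\<lambda>x. Z x ^ 2)"
    and "integrable M (\<lambda>x. Z x ^ 4)"
    and "integral\<^sup>L M (\<lambda>x. Z x ^ 4) = 3 * (integral\<^sup>L M (\<lambda>x. Z x ^ 2))^2"
    and "integral\<^sup>L M (\<lambda>x. cos (Z x)) = exp (- integral\<^sup>L M (\<lambda>x. Z x ^ 2) / 2)"
    and "integral\<^sup>L M (\<lambda>x. sin (Z x)) = 0"
proof -
  interpret prob_space M by (rule P)
  have all: "integrable M (\<lambda>x. Z x ^ 2) \<and> integrable M (\<lambda>x. Z x ^ 4) \<and>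
    integral\<^sup>L M (\<lambda>x. Z x ^ 4) = 3 * (integral\<^sup>L M (\<lambda>x. Z x ^ 2))^2 \<and>
    integral\<^sup>L M (\<lambda>x. cos (Z x)) = exp (- integral\<^sup>L M (\<lambda>x. Z x ^ 2) / 2) \<and>
    integral\<^sup>L M (\<lambda>x. sin (Z x)) = 0"
    using G unfolding gaussian_rv_def
  proof (elim disjE exE conjE)
    fix \<mu> \<sigma> assume s: "0 < \<sigma>" and D: "distributed M lborel Z (normal_density \<mu> \<sigma>)"
    have "\<mu> = 0" using normal_distributed_expectation[OF s D] E0 by simp
    then have D': "distributed M lborel (\<lambda>x. Z x / \<sigma>) std_normal_density"
      using normal_standard_normal_convert[OF s, of Z \<mu>] D by simp
    define W where "W x = Z x / \<sigma>" for x
    have ZW: "Z x = \<sigma> * W x" for x using s by (simp add: W_def)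
    note F = std_normal_facts[OF D'[folded W_def]]
    have i2: "integrable M (\<lambda>x. Z x ^ 2)" unfolding ZW using F(5)
      by (simp add: power_mult_distrib)
    have i4: "integrable M (\<lambda>x. Z x ^ 4)" unfolding ZW using F(6)
      by (simp add: power_mult_distrib)
    have v: "integral\<^sup>L M (\<lambda>x. Z x ^ 2) = \<sigma>^2" unfolding ZW using F(3)
      by (simp add: power_mult_distrib)
    have m4: "integral\<^sup>L M (\<lambda>x. Z x ^ 4) = 3 * \<sigma>^4" unfolding ZW using F(4)
      by (simp add: power_mult_distrib)
    have "(\<sigma>^2)^2 = \<sigma>^4" by (simp flip: power_mult)
    then have m4': "integral\<^sup>L M (\<lambda>x. Z x ^ 4) = 3 * (integral\<^sup>L M (\<lambda>x. Z x ^ 2))^2"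
      using m4 v by simp
    have cs: "integral\<^sup>L M (\<lambda>x. cos (Z x)) = exp (- integral\<^sup>L M (\<lambda>x. Z x ^ 2) / 2)"
      using F(1)[of \<sigma>] v by (simp add: ZW)
    have sn: "integral\<^sup>L M (\<lambda>x. sin (Z x)) = 0"
      using F(2)[of \<sigma>] by (simp add: ZW)
    show ?thesis using i2 i4 m4' cs sn by blast
  next
    fix c assume m: "Z \<in> borel_measurable M" and ae: "AE x in M. Z x = c"
    have "integral\<^sup>L M Z = c" using integral_cong_AE[OF m _ ae] by (simp add: prob_space)
    then have c: "c = 0" using E0 by simp
    have ae0: "AE x in M. Z x = 0" using ae c by simp
    have e1: "integral\<^sup>L M (\<lambda>x. f (Z x)) = f 0" if "f \<in> borel_measurable borel" for f :: "real \<Rightarrow> real"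
    proof -
      have "integral\<^sup>L M (\<lambda>x. f (Z x)) = integral\<^sup>L M (\<lambda>x. f 0)"
        using ae0 m that by (intro integral_cong_AE) auto
      then show ?thesis by (simp add: prob_space)
    qed
    have i: "integrable M (\<lambda>x. f (Z x))" if "f \<in> borel_measurable borel" for f :: "real \<Rightarrow> real"
    proof -
      have "integrable M (\<lambda>x. f 0)" by simp
      moreover have "(\<lambda>x. f (Z x)) \<in> borel_measurable M" using m that by measurable
      moreover have "AE x in M. f 0 = f (Z x)" using ae0 by auto
      ultimately show ?thesis by (rule integrable_cong_AE_imp)
    qed
    show ?thesis
      using e1[of "\<lambda>x. x^2"] e1[of "\<lambda>x. x^4"] e1[of cos] e1[of sin]
        i[of "\<lambda>x. x^2"] i[of "\<lambda>x. x^4"] by simp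
  qed
  then show "integrable M (\<lambda>x. Z x ^ 2)"
    and "integrable M (\<lambda>x. Z x ^ 4)"
    and "integral\<^sup>L M (\<lambda>x. Z x ^ 4) = 3 * (integral\<^sup>L M (\<lambda>x. Z x ^ 2))^2"
    and "integral\<^sup>L M (\<lambda>x. cos (Z x)) = exp (- integral\<^sup>L M (\<lambda>x. Z x ^ 2) / 2)"
    and "integral\<^sup>L M (\<lambda>x. sin (Z x)) = 0" by auto
qed



lemma harm_Suc_pos: "0 < (harm (Suc n) :: real)" by (rule harm_pos) simp

lemma harm_Suc_nz: "(harm (Suc n) :: real) \<noteq> 0" using harm_Suc_pos[of n] by linarith

lemma mult_ratio_cancel: "(l::real) \<noteq> 0 \<Longrightarrow> h \<noteq> 0 \<Longrightarrow> (1 / l * S) * (l / h) = S / h"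
  by (simp add: field_simps)

lemma sum_wdiv: "(\<Sum>k\<in>A. (a k / h) * c k) = (\<Sum>k\<in>A. a k * c k) / (h::real)"
  by (simp add: sum_divide_distrib)

lemma mult_ratio_cancel2: "(h::real) \<noteq> 0 \<Longrightarrow> (S / h) * (h / l) = (1 / l) * S"
  by (simp add: field_simps)

lemma harm_eq: "harm n = (\<Sum>k=1..n. 1 / real k)"
  unfolding harm_def by (simp add: inverse_eq_divide)

lemma sum_w: "(\<Sum>k\<in>{1..Suc n}. (1 / real k) / harm (Suc n)) = 1"
proof -
  have "(\<Sum>k\<in>{1..Suc n}. (1 / real k) / harm (Suc n)) = harm (Suc n) / harm (Suc n)"
    by (simp only: sum_divide_distrib[symmetric] harm_eq[symmetric])
  also have "\<dots> = 1" using harm_Suc_nz[of n] by simp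
  finally show ?thesis .
qed

definition wpmf :: "nat \<Rightarrow> nat pmf" where
  "wpmf n = embed_pmf (\<lambda>k. if k \<in> {1..Suc n} then (1 / real k) / harm (Suc n) else 0)"

lemma pmf_wpmf: "pmf (wpmf n) k = (if k \<in> {1..Suc n} then (1 / real k) / harm (Suc n) else 0)"
  unfolding wpmf_def
proof (rule pmf_embed_pmf)
  show "0 \<le> (if k \<in> {1..Suc n} then (1 / real k) / harm (Suc n) else 0)" for k
    by (simp add: harm_nonneg)
  note s1 = sum_w[of n]
  have "(\<integral>\<^sup>+ k. ennreal (if k \<in> {1..Suc n} then (1 / real k) / harm (Suc n) else 0) \<partial>count_space UNIV)
     = (\<Sum>k\<in>{1..Suc n}. ennreal (if k \<in> {1..Suc n} then (1 / real k) / harm (Suc n) else 0))"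
    by (rule nn_integral_count_space') auto
  also have "\<dots> = (\<Sum>k\<in>{1..Suc n}. ennreal ((1 / real k) / harm (Suc n)))" by simp
  also have "\<dots> = ennreal (\<Sum>k\<in>{1..Suc n}. (1 / real k) / harm (Suc n))"
    by (rule sum_ennreal) (simp add: harm_nonneg)
  also have "\<dots> = 1" using s1 by simp
  finally show "(\<integral>\<^sup>+ k. ennreal (if k \<in> {1..Suc n} then (1 / real k) / harm (Suc n) else 0) \<partial>count_space UNIV) = 1" .
qed

definition wmeas :: "(nat \<Rightarrow> real) \<Rightarrow> nat \<Rightarrow> real measure" where
  "wmeas x n = distr (measure_pmf (wpmf n)) borel x"

lemma real_distribution_wmeas: "real_distribution (wmeas x n)"
  unfolding wmeas_def
  by (rule prob_space.real_distribution_distr) (auto simp: measure_pmf.prob_space_axioms)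

lemma integral_wmeas:
  fixes f :: "real \<Rightarrow> 'b::{banach, second_countable_topology}"
  assumes [measurable]: "f \<in> borel_measurable borel"
  shows "integral\<^sup>L (wmeas x n) f = (\<Sum>k\<in>{1..Suc n}. ((1 / real k) / harm (Suc n)) *\<^sub>R f (x k))"
proof -
  have "integral\<^sup>L (wmeas x n) f = integral\<^sup>L (measure_pmf (wpmf n)) (\<lambda>k. f (x k))"
    unfolding wmeas_def by (rule integral_distr; auto)
  also have "\<dots> = (\<Sum>k\<in>{1..Suc n}. pmf (wpmf n) k *\<^sub>R f (x k))"
    by (rule integral_measure_pmf) (auto simp: set_pmf_eq pmf_wpmf split: if_splits)
  also have "\<dots> = (\<Sum>k\<in>{1..Suc n}. ((1 / real k) / harm (Suc n)) *\<^sub>R f (x k))"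
    by (intro sum.cong refl) (simp add: pmf_wpmf)
  finally show ?thesis .
qed

lemma norm_iexp_diff: "norm (iexp a - iexp b) \<le> \<bar>a - b\<bar>"
proof -
  have "iexp a - iexp b = iexp b * (iexp (a - b) - 1)"
    by (simp add: algebra_simps flip: exp_add)
  then have "norm (iexp a - iexp b) = norm (iexp (a - b) - 1)"
    by (simp add: norm_mult)
  also have "\<dots> \<le> \<bar>a - b\<bar>" using iexp_approx1[of "a - b" 0] by simp
  finally show ?thesis .
qed

lemma abs_le_1_sq: "\<bar>y::real\<bar> \<le> 1 + y^2"
proof (cases "\<bar>y\<bar> \<le> 1")
  case True then show ?thesis by (simp add: add_increasing2)
next
  case False
  then have "\<bar>y\<bar> * 1 \<le> \<bar>y\<bar> * \<bar>y\<bar>" by (intro mult_left_mono) auto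
  then show ?thesis by (simp add: power2_eq_square abs_mult_self)
qed

lemma ln_over_harm: "(\<lambda>n. ln (real n) / harm n :: real) \<longlonglongrightarrow> 1"
proof -
  have "(\<lambda>n. inverse (harm n / ln (real n)) :: real) \<longlonglongrightarrow> inverse 1"
    by (intro tendsto_inverse harm_over_ln) simp
  then show ?thesis by (simp add: inverse_eq_divide)
qed

lemma det_conv:
  fixes x :: "nat \<Rightarrow> real" and \<phi> :: "real \<Rightarrow> real"
  assumes hc: "\<And>t. t \<in> \<rat> \<Longrightarrow> (\<lambda>n. (1 / ln (real n)) * (\<Sum>k=1..n. (1 / real k) * cos (t * x k))) \<longlonglongrightarrow> exp (- (t^2) / 2)"
  and hs: "\<And>t. t \<in> \<rat> \<Longrightarrow> (\<lambda>n. (1 / ln (real n)) * (\<Sum>k=1..n. (1 / real k) * sin (t * x k))) \<longlonglongrightarrow> 0"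
  and hq: "(\<lambda>n. (1 / ln (real n)) * (\<Sum>k=1..n. (1 / real k) * (x k)^2)) \<longlonglongrightarrow> 1"
  and cont: "continuous_on UNIV \<phi>" and bdd: "bounded (range \<phi>)"
  shows "(\<lambda>n. (1 / ln (real n)) * (\<Sum>k=1..n. (1 / real k) * \<phi> (x k))) \<longlonglongrightarrow> integral\<^sup>L std_normal_distribution \<phi>"
proof -
  define \<mu> where "\<mu> = wmeas x"
  have rd: "real_distribution (\<mu> n)" for n unfolding \<mu>_def by (rule real_distribution_wmeas)
  have lh: "(\<lambda>n. ln (real (Suc n)) / harm (Suc n) :: real) \<longlonglongrightarrow> 1"
    by (rule LIMSEQ_Suc[OF ln_over_harm])
  have norm_lim: "(\<lambda>n. (\<Sum>k=1..Suc n. (1 / real k) * f (x k)) / harm (Suc n)) \<longlonglongrightarrow> L"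
    if "(\<lambda>n. (1 / ln (real n)) * (\<Sum>k=1..n. (1 / real k) * f (x k))) \<longlonglongrightarrow> L" for f L
  proof -
    have lim: "(\<lambda>n. ((1 / ln (real (Suc n))) * (\<Sum>k=1..Suc n. (1 / real k) * f (x k))) * (ln (real (Suc n)) / harm (Suc n))) \<longlonglongrightarrow> L * 1"
      by (intro tendsto_mult lh LIMSEQ_Suc[OF that])
    have eq: "((1 / ln (real (Suc n))) * (\<Sum>k=1..Suc n. (1 / real k) * f (x k))) * (ln (real (Suc n)) / harm (Suc n))
        = (\<Sum>k=1..Suc n. (1 / real k) * f (x k)) / harm (Suc n)" if "n \<ge> 1" for n
    proof -
      have "0 < ln (real (Suc n))" using that by simp
      then show ?thesis using harm_Suc_nz[of n] by (intro mult_ratio_cancel) auto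
    qed
    have ev: "eventually (\<lambda>n. ((1 / ln (real (Suc n))) * (\<Sum>k=1..Suc n. (1 / real k) * f (x k))) * (ln (real (Suc n)) / harm (Suc n))
        = (\<Sum>k=1..Suc n. (1 / real k) * f (x k)) / harm (Suc n)) sequentially"
      using eventually_ge_at_top[of "1::nat"] by eventually_elim (rule eq)
    show ?thesis using Lim_transform_eventually[OF lim ev] by simp
  qed
  have char_eq: "char (\<mu> n) t = Complex ((\<Sum>k=1..Suc n. (1 / real k) * cos (t * x k)) / harm (Suc n))
                                         ((\<Sum>k=1..Suc n. (1 / real k) * sin (t * x k)) / harm (Suc n))" for n t
  proof -
    have "char (\<mu> n) t = (\<Sum>k\<in>{1..Suc n}. ((1 / real k) / harm (Suc n)) *\<^sub>R iexp (t * x k))"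
      unfolding char_def \<mu>_def by (rule integral_wmeas) simp
    then have "Re (char (\<mu> n) t) = (\<Sum>k\<in>{1..Suc n}. ((1 / real k) / harm (Suc n)) * cos (t * x k))"
          and "Im (char (\<mu> n) t) = (\<Sum>k\<in>{1..Suc n}. ((1 / real k) / harm (Suc n)) * sin (t * x k))"
      by (simp_all add: Re_exp Im_exp scaleR_conv_of_real del: sum.cl_ivl_Suc)
    then show ?thesis by (simp only: complex_eq_iff sum_wdiv complex.sel)
  qed
  have char_rat: "(\<lambda>n. char (\<mu> n) t) \<longlonglongrightarrow> complex_of_real (exp (- (t^2) / 2))" if t: "t \<in> \<rat>" for t
  proof -
    have "(\<lambda>n. Complex ((\<Sum>k=1..Suc n. (1 / real k) * cos (t * x k)) / harm (Suc n))
                        ((\<Sum>k=1..Suc n. (1 / real k) * sin (t * x k)) / harm (Suc n)))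
          \<longlonglongrightarrow> Complex (exp (- (t^2) / 2)) 0"
      by (intro tendsto_Complex norm_lim[of "\<lambda>y. cos (t * y)"] norm_lim[of "\<lambda>y. sin (t * y)"] hc hs t)
    then show ?thesis unfolding char_eq by (simp add: complex_of_real_def)
  qed
  have sq_lim: "(\<lambda>n. (\<Sum>k=1..Suc n. (1 / real k) * (x k)^2) / harm (Suc n)) \<longlonglongrightarrow> 1"
    by (rule norm_lim[of "\<lambda>y. y^2"]) (use hq in simp)
  have char_diff: "norm (char (\<mu> n) t - char (\<mu> n) q) \<le> \<bar>t - q\<bar> * (1 + (\<Sum>k=1..Suc n. (1 / real k) * (x k)^2) / harm (Suc n))"
    for n t q
  proof -
    define w where "w k = (1 / real k) / harm (Suc n)" for k
    have w0: "0 \<le> w k" for k unfolding w_def by (simp add: harm_nonneg)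
    have sw: "(\<Sum>k\<in>{1..Suc n}. w k) = 1" unfolding w_def by (rule sum_w)
    have deq: "char (\<mu> n) t - char (\<mu> n) q = (\<Sum>k\<in>{1..Suc n}. w k *\<^sub>R (iexp (t * x k) - iexp (q * x k)))"
      unfolding char_def \<mu>_def w_def
      by (simp add: integral_wmeas scaleR_diff_right sum_subtractf)
    have "norm (char (\<mu> n) t - char (\<mu> n) q) \<le> (\<Sum>k\<in>{1..Suc n}. norm (w k *\<^sub>R (iexp (t * x k) - iexp (q * x k))))"
      unfolding deq by (rule norm_sum)
    also have "\<dots> \<le> (\<Sum>k\<in>{1..Suc n}. w k * (\<bar>t - q\<bar> * (1 + (x k)^2)))"
    proof (intro sum_mono)
      fix k
      have "norm (iexp (t * x k) - iexp (q * x k)) \<le> \<bar>t * x k - q * x k\<bar>" by (rule norm_iexp_diff)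
      also have "\<dots> = \<bar>t - q\<bar> * \<bar>x k\<bar>" by (simp add: abs_mult flip: left_diff_distrib)
      also have "\<dots> \<le> \<bar>t - q\<bar> * (1 + (x k)^2)" by (intro mult_left_mono abs_le_1_sq) auto
      finally show "norm (w k *\<^sub>R (iexp (t * x k) - iexp (q * x k))) \<le> w k * (\<bar>t - q\<bar> * (1 + (x k)^2))"
        using w0[of k] by (simp add: mult_left_mono)
    qed
    also have "\<dots> = \<bar>t - q\<bar> * ((\<Sum>k\<in>{1..Suc n}. w k) + (\<Sum>k\<in>{1..Suc n}. w k * (x k)^2))"
      by (simp add: sum_distrib_left sum.distrib algebra_simps)
    also have "(\<Sum>k\<in>{1..Suc n}. w k * (x k)^2) = (\<Sum>k=1..Suc n. (1 / real k) * (x k)^2) / harm (Suc n)"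
      unfolding w_def by (rule sum_wdiv)
    finally show ?thesis using sw by simp
  qed
  have char_all: "(\<lambda>n. char (\<mu> n) t) \<longlonglongrightarrow> char std_normal_distribution t" for t
  proof -
    define e where "e s = complex_of_real (exp (- (s^2) / 2))" for s
    have econt: "isCont e t" unfolding e_def by (intro continuous_intros) auto
    show ?thesis
      unfolding char_std_normal_distribution e_def[symmetric]
    proof (rule LIMSEQ_I)
      fix r :: real assume r: "0 < r"
      obtain d where d: "d > 0" "\<And>s. s \<noteq> t \<and> norm (s - t) < d \<Longrightarrow> norm (e s - e t) < r / 3"
        using LIM_D[OF econt[unfolded isCont_def], of "r/3"] r by auto
      define d' where "d' = min d (r / 9)"
      have d': "0 < d'" using d r by (simp add: d'_def)
      obtain q where q: "q \<in> \<rat>" "t < q" "q < t + d'"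
        using Rats_dense_in_real[of t "t + d'"] d' by auto
      have tq: "\<bar>t - q\<bar> < d'" using q by simp
      have eq: "norm (e q - e t) < r / 3" using d(2)[of q] q d'_def tq by (auto simp: dist_norm)
      have ev1: "eventually (\<lambda>n. norm (char (\<mu> n) q - e q) < r / 3) sequentially"
      proof -
        have A: "\<forall>ee>0. eventually (\<lambda>n. dist (char (\<mu> n) q) (e q) < ee) sequentially"
          using char_rat[OF q(1)] unfolding e_def tendsto_iff by blast
        have r3: "0 < r / 3" using r by simp
        have "eventually (\<lambda>n. dist (char (\<mu> n) q) (e q) < r / 3) sequentially"
          using A r3 by blast
        then show ?thesis by (simp only: dist_norm)
      qed
      have ev2: "eventually (\<lambda>n. (\<Sum>k=1..Suc n. (1 / real k) * (x k)^2) / harm (Suc n) < 2) sequentially"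
        using sq_lim by (rule order_tendstoD) simp
      have "eventually (\<lambda>n. norm (char (\<mu> n) t - e t) < r) sequentially"
        using ev1 ev2
      proof eventually_elim
        case (elim n)
        have "norm (char (\<mu> n) t - e t) \<le> norm (char (\<mu> n) t - char (\<mu> n) q) + norm (char (\<mu> n) q - e q) + norm (e q - e t)"
        proof -
          have eq3: "char (\<mu> n) t - e t = ((char (\<mu> n) t - char (\<mu> n) q) + (char (\<mu> n) q - e q)) + (e q - e t)"
            by simp
          have "norm (((char (\<mu> n) t - char (\<mu> n) q) + (char (\<mu> n) q - e q)) + (e q - e t))
               \<le> norm ((char (\<mu> n) t - char (\<mu> n) q) + (char (\<mu> n) q - e q)) + norm (e q - e t)"
            by (rule norm_triangle_ineq)
          also have "norm ((char (\<mu> n) t - char (\<mu> n) q) + (char (\<mu> n) q - e q))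
               \<le> norm (char (\<mu> n) t - char (\<mu> n) q) + norm (char (\<mu> n) q - e q)"
            by (rule norm_triangle_ineq)
          finally show ?thesis unfolding eq3 by simp
        qed
        also have "norm (char (\<mu> n) t - char (\<mu> n) q) \<le> \<bar>t - q\<bar> * 3"
        proof -
          have "norm (char (\<mu> n) t - char (\<mu> n) q) \<le> \<bar>t - q\<bar> * (1 + (\<Sum>k=1..Suc n. (1 / real k) * (x k)^2) / harm (Suc n))"
            by (rule char_diff)
          also have "\<dots> \<le> \<bar>t - q\<bar> * 3" using elim(2) by (intro mult_left_mono) auto
          finally show ?thesis .
        qed
        also have "\<bar>t - q\<bar> * 3 \<le> r / 3"
        proof -
          have "d' \<le> r / 9" by (simp add: d'_def)
          then have "\<bar>t - q\<bar> \<le> r / 9" using tq by linarith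
          then show ?thesis by (simp add: field_simps)
        qed
        finally show ?case using elim(1) eq by linarith
      qed
      then show "\<exists>no. \<forall>n\<ge>no. norm (char (\<mu> n) t - e t) < r" by (simp add: eventually_sequentially)
    qed
  qed
  have wc: "weak_conv_m \<mu> std_normal_distribution"
    by (rule levy_continuity[OF rd real_dist_normal_dist char_all])
  obtain B where B: "\<And>y. norm (\<phi> y) \<le> B"
    using bdd unfolding bounded_iff by auto
  have ic: "isCont \<phi> y" for y using cont by (simp add: continuous_on_eq_continuous_at)
  have lim1: "(\<lambda>n. integral\<^sup>L (\<mu> n) \<phi>) \<longlonglongrightarrow> integral\<^sup>L std_normal_distribution \<phi>"
    by (rule weak_conv_imp_integral_bdd_continuous_conv[OF rd real_dist_normal_dist wc ic B])
  have int_eq: "integral\<^sup>L (\<mu> n) \<phi> = (\<Sum>k=1..Suc n. (1 / real k) * \<phi> (x k)) / harm (Suc n)" for n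
  proof -
    have "\<phi> \<in> borel_measurable borel" using cont by (rule borel_measurable_continuous_onI)
    then have "integral\<^sup>L (\<mu> n) \<phi> = (\<Sum>k\<in>{1..Suc n}. ((1 / real k) / harm (Suc n)) * \<phi> (x k))"
      unfolding \<mu>_def by (simp add: integral_wmeas del: sum.cl_ivl_Suc)
    then show ?thesis by (simp only: sum_wdiv)
  qed
  have limA: "(\<lambda>n. ((\<Sum>k=1..Suc n. (1 / real k) * \<phi> (x k)) / harm (Suc n)) * (harm (Suc n) / ln (real (Suc n))))
        \<longlonglongrightarrow> integral\<^sup>L std_normal_distribution \<phi> * 1"
    using lim1 unfolding int_eq by (intro tendsto_mult LIMSEQ_Suc[OF harm_over_ln])
  have eqA: "((\<Sum>k=1..Suc n. (1 / real k) * \<phi> (x k)) / harm (Suc n)) * (harm (Suc n) / ln (real (Suc n)))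
      = (1 / ln (real (Suc n))) * (\<Sum>k=1..Suc n. (1 / real k) * \<phi> (x k))" for n
    using harm_Suc_nz[of n] by (rule mult_ratio_cancel2)
  have "(\<lambda>n. (1 / ln (real (Suc n))) * (\<Sum>k=1..Suc n. (1 / real k) * \<phi> (x k)))
        \<longlonglongrightarrow> integral\<^sup>L std_normal_distribution \<phi>" using limA unfolding eqA mult_1_right .
  then show ?thesis by (rule LIMSEQ_imp_Suc)
qed



locale fbm_ctx =
  fixes M :: "'a measure" and H :: real and B :: "real \<Rightarrow> 'a \<Rightarrow> real"
  assumes fbm: "fbm M H B"
begin

lemma prob: "prob_space M" using fbm unfolding fbm_def centered_gaussian_process_def by auto

sublocale prob_space M by (rule prob)

lemma H: "0 < H" "H < 1" using fbm unfolding fbm_def by auto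

lemma Bmeas[measurable]: "t \<ge> 0 \<Longrightarrow> B t \<in> borel_measurable M"
  using fbm unfolding fbm_def centered_gaussian_process_def by auto

lemma Bint: "t \<ge> 0 \<Longrightarrow> integrable M (B t)"
  using fbm unfolding fbm_def centered_gaussian_process_def by auto

lemma Bmean: "t \<ge> 0 \<Longrightarrow> expectation (B t) = 0"
  using fbm unfolding fbm_def centered_gaussian_process_def by auto

lemma Bgauss: "finite I \<Longrightarrow> I \<subseteq> {0..} \<Longrightarrow> gaussian_rv M (\<lambda>\<omega>. \<Sum>t\<in>I. c t * B t \<omega>)"
  using fbm unfolding fbm_def centered_gaussian_process_def by auto

lemma Bcov: "t \<ge> 0 \<Longrightarrow> s \<ge> 0 \<Longrightarrow> expectation (\<lambda>\<omega>. B t \<omega> * B s \<omega>) = fbmK H t s"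
  using fbm unfolding fbm_def fbmK_def by auto

lemma Bsq_int: assumes "t \<ge> 0" shows "integrable M (\<lambda>\<omega>. B t \<omega> ^ 2)"
proof -
  have g: "gaussian_rv M (\<lambda>\<omega>. \<Sum>u\<in>{t}. (\<lambda>_. 1) u * B u \<omega>)" using assms by (intro Bgauss) auto
  show ?thesis using gauss_facts(1)[OF prob _ Bint[OF assms] Bmean[OF assms]] g by simp
qed

lemma Bprod_int: assumes "t \<ge> 0" "s \<ge> 0" shows "integrable M (\<lambda>\<omega>. B t \<omega> * B s \<omega>)"
proof (rule Bochner_Integration.integrable_bound)
  show "integrable M (\<lambda>\<omega>. B t \<omega> ^ 2 + B s \<omega> ^ 2)" using Bsq_int assms by auto
  show "(\<lambda>\<omega>. B t \<omega> * B s \<omega>) \<in> borel_measurable M" using assms by measurable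
  show "AE \<omega> in M. norm (B t \<omega> * B s \<omega>) \<le> norm (B t \<omega> ^ 2 + B s \<omega> ^ 2)"
  proof (intro AE_I2)
    fix \<omega>
    have a: "2 * \<bar>B t \<omega>\<bar> * \<bar>B s \<omega>\<bar> \<le> \<bar>B t \<omega>\<bar>^2 + \<bar>B s \<omega>\<bar>^2" by (rule sum_squares_bound)
    have b: "0 \<le> \<bar>B t \<omega>\<bar> * \<bar>B s \<omega>\<bar>" by simp
    have c: "norm (B t \<omega> * B s \<omega>) = \<bar>B t \<omega>\<bar> * \<bar>B s \<omega>\<bar>" by (simp add: abs_mult)
    have d: "norm (B t \<omega> ^ 2 + B s \<omega> ^ 2) = \<bar>B t \<omega>\<bar>^2 + \<bar>B s \<omega>\<bar>^2" by simp
    show "norm (B t \<omega> * B s \<omega>) \<le> norm (B t \<omega> ^ 2 + B s \<omega> ^ 2)"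
      unfolding c d using a b by linarith
  qed
qed

definition X :: "nat \<Rightarrow> 'a \<Rightarrow> real" where "X k \<omega> = B (real k) \<omega> / real k powr H"

definition r :: "nat \<Rightarrow> nat \<Rightarrow> real" where "r j k = fbmK H (real j) (real k) / (real j powr H * real k powr H)"

lemma Xmeas[measurable]: "X k \<in> borel_measurable M"
proof -
  have [measurable]: "B (real k) \<in> borel_measurable M" by (rule Bmeas) simp
  show ?thesis unfolding X_def by measurable
qed

lemma Xprod: "1 \<le> j \<Longrightarrow> 1 \<le> k \<Longrightarrow> integrable M (\<lambda>\<omega>. X j \<omega> * X k \<omega>) \<and> expectation (\<lambda>\<omega>. X j \<omega> * X k \<omega>) = r j k"
proof -
  assume jk: "1 \<le> j" "1 \<le> k"
  have eq: "X j \<omega> * X k \<omega> = (B (real j) \<omega> * B (real k) \<omega>) / (real j powr H * real k powr H)" for \<omega>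
    unfolding X_def by simp
  have i: "integrable M (\<lambda>\<omega>. B (real j) \<omega> * B (real k) \<omega>)" by (rule Bprod_int) auto
  have e: "expectation (\<lambda>\<omega>. B (real j) \<omega> * B (real k) \<omega>) = fbmK H (real j) (real k)" by (rule Bcov) auto
  show ?thesis unfolding eq r_def using i e by simp
qed

lemma r_diag: "1 \<le> k \<Longrightarrow> r k k = 1"
proof -
  assume k: "1 \<le> k"
  have "fbmK H (real k) (real k) = real k powr (2*H)" by (simp add: fbmK_def)
  also have "\<dots> = real k powr H * real k powr H" by (simp add: powr_add[symmetric])
  finally show ?thesis using k by (simp add: r_def)
qed

lemma r_bounds: "1 \<le> j \<Longrightarrow> 1 \<le> k \<Longrightarrow> 0 \<le> r j k \<and> r j k \<le> 2 * rho (min H (1 - H)) j k"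
proof -
  assume "1 \<le> j" "1 \<le> k"
  from corr_bound_nat[OF H this] show ?thesis unfolding r_def by (intro conjI)
qed

lemma r_le2: "1 \<le> j \<Longrightarrow> 1 \<le> k \<Longrightarrow> \<bar>r j k\<bar> \<le> 2"
proof -
  assume "1 \<le> j" "1 \<le> k"
  then have a: "0 \<le> r j k" "r j k \<le> 2 * rho (min H (1 - H)) j k" using r_bounds by auto
  have "rho (min H (1 - H)) j k \<le> 1" using H by (intro rho_le1) auto
  then show ?thesis using a by linarith
qed

lemma pair_gauss:
  fixes a b :: real
  assumes jk: "1 \<le> j" "1 \<le> k"
  shows "gaussian_rv M (\<lambda>\<omega>. a * X j \<omega> + b * X k \<omega>)"
    and "integrable M (\<lambda>\<omega>. a * X j \<omega> + b * X k \<omega>)"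
    and "expectation (\<lambda>\<omega>. a * X j \<omega> + b * X k \<omega>) = 0"
    and "expectation (\<lambda>\<omega>. (a * X j \<omega> + b * X k \<omega>)^2) = a^2 + b^2 + 2 * a * b * r j k"
proof -
  define I where "I = {real j, real k}"
  define c where "c u = (if u = real j then a / real j powr H else 0) + (if u = real k then b / real k powr H else 0)" for u
  have sumeq: "(\<Sum>u\<in>I. c u * B u \<omega>) = a * X j \<omega> + b * X k \<omega>" for \<omega>
  proof (cases "j = k")
    case True then show ?thesis by (simp add: I_def c_def X_def field_simps)
  next
    case False then show ?thesis by (simp add: I_def c_def X_def field_simps)
  qed
  have "gaussian_rv M (\<lambda>\<omega>. \<Sum>u\<in>I. c u * B u \<omega>)" by (intro Bgauss) (auto simp: I_def)
  then show "gaussian_rv M (\<lambda>\<omega>. a * X j \<omega> + b * X k \<omega>)" unfolding sumeq .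
  have ij: "integrable M (X j)" and ik: "integrable M (X k)"
    unfolding X_def using Bint[of "real j"] Bint[of "real k"] by auto
  show "integrable M (\<lambda>\<omega>. a * X j \<omega> + b * X k \<omega>)" using ij ik by auto
  have ej: "expectation (X j) = 0" and ek: "expectation (X k) = 0"
    unfolding X_def using Bmean[of "real j"] Bmean[of "real k"] by auto
  show "expectation (\<lambda>\<omega>. a * X j \<omega> + b * X k \<omega>) = 0" using ij ik ej ek by simp
  have sq: "(a * X j \<omega> + b * X k \<omega>)^2 = a^2 * (X j \<omega> * X j \<omega>) + b^2 * (X k \<omega> * X k \<omega>) + 2 * a * b * (X j \<omega> * X k \<omega>)" for \<omega>
    by (simp add: power2_eq_square algebra_simps)
  note pj = Xprod[OF jk(1) jk(1)] and pk = Xprod[OF jk(2) jk(2)] and pjk = Xprod[OF jk]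
  show "expectation (\<lambda>\<omega>. (a * X j \<omega> + b * X k \<omega>)^2) = a^2 + b^2 + 2 * a * b * r j k"
    unfolding sq using pj pk pjk r_diag[OF jk(1)] r_diag[OF jk(2)] by simp
qed

lemma pair_facts:
  fixes a b :: real
  assumes jk: "1 \<le> j" "1 \<le> k"
  defines "v \<equiv> a^2 + b^2 + 2 * a * b * r j k"
  shows "expectation (\<lambda>\<omega>. cos (a * X j \<omega> + b * X k \<omega>)) = exp (- v / 2)"
    and "expectation (\<lambda>\<omega>. sin (a * X j \<omega> + b * X k \<omega>)) = 0"
    and "integrable M (\<lambda>\<omega>. (a * X j \<omega> + b * X k \<omega>)^4)"
    and "expectation (\<lambda>\<omega>. (a * X j \<omega> + b * X k \<omega>)^4) = 3 * v^2"
proof -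
  note G = gauss_facts[OF prob pair_gauss(1-3)[OF jk, of a b]]
  have e2: "expectation (\<lambda>\<omega>. (a * X j \<omega> + b * X k \<omega>)^2) = v"
    unfolding v_def by (rule pair_gauss(4)[OF jk])
  show "expectation (\<lambda>\<omega>. cos (a * X j \<omega> + b * X k \<omega>)) = exp (- v / 2)"
    using G(4) unfolding e2 .
  show "expectation (\<lambda>\<omega>. sin (a * X j \<omega> + b * X k \<omega>)) = 0" by (rule G(5))
  show "integrable M (\<lambda>\<omega>. (a * X j \<omega> + b * X k \<omega>)^4)" by (rule G(2))
  show "expectation (\<lambda>\<omega>. (a * X j \<omega> + b * X k \<omega>)^4) = 3 * v^2"
    using G(3) unfolding e2 .
qed

end



lemma exp_sub1_bound: "\<bar>exp u - 1\<bar> \<le> \<bar>u\<bar> * exp \<bar>u::real\<bar>"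
proof (cases "u \<ge> 0")
  case True
  have "1 - u \<le> exp (- u)" using exp_ge_add_one_self[of "-u"] by simp
  then have "exp u * (1 - u) \<le> exp u * exp (- u)" by (intro mult_left_mono) auto
  then have "exp u - 1 \<le> u * exp u" by (simp add: exp_minus algebra_simps)
  moreover have "1 \<le> exp u" using True by simp
  ultimately show ?thesis using True by simp
next
  case False
  have "1 + u \<le> exp u" by (rule exp_ge_add_one_self)
  moreover have "exp u \<le> 1" using False by simp
  moreover have "1 \<le> exp \<bar>u\<bar>" by simp
  moreover have "\<bar>u\<bar> * 1 \<le> \<bar>u\<bar> * exp \<bar>u\<bar>" using \<open>1 \<le> exp \<bar>u\<bar>\<close> by (intro mult_left_mono) auto
  ultimately have "\<bar>exp u - 1\<bar> \<le> \<bar>u\<bar> * 1" using False by linarith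
  also have "\<dots> \<le> \<bar>u\<bar> * exp \<bar>u\<bar>" by fact
  finally show ?thesis .
qed

lemma cov_trig_bound:
  fixes t r \<rho> :: real
  assumes r: "0 \<le> r" "r \<le> 2 * \<rho>" "\<rho> \<le> 1"
  shows "abs (exp (- (t^2)) * ((exp (t^2 * r) - 1) + (exp (- (t^2 * r)) - 1)) / 2) \<le> (2 * t^2 * exp (2 * t^2)) * \<rho>"
    and "abs (exp (- (t^2)) * ((exp (t^2 * r) - 1) - (exp (- (t^2 * r)) - 1)) / 2) \<le> (2 * t^2 * exp (2 * t^2)) * \<rho>"
proof -
  define u where "u = t^2 * r"
  have u0: "0 \<le> u" unfolding u_def using r by simp
  have ub: "u \<le> t^2 * (2 * \<rho>)" unfolding u_def using r by (intro mult_left_mono) auto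
  have "t^2 * (2 * \<rho>) \<le> t^2 * 2" using r by (intro mult_left_mono) auto
  then have ub2: "u \<le> 2 * t^2" using ub by linarith
  have eu: "u * exp u \<le> u * exp (2 * t^2)" using ub2 u0 by (intro mult_left_mono) auto
  have b1: "\<bar>exp u - 1\<bar> \<le> u * exp (2 * t^2)"
    using exp_sub1_bound[of u] u0 eu by simp
  have b2: "\<bar>exp (- u) - 1\<bar> \<le> u * exp (2 * t^2)"
    using exp_sub1_bound[of "-u"] u0 eu by simp
  have e1: "exp (- (t^2)) \<le> 1" by simp
  have e0: "0 \<le> exp (- (t^2))" by simp
  have key: "u * exp (2 * t^2) \<le> (2 * t^2 * exp (2 * t^2)) * \<rho>"
  proof -
    have "u * exp (2 * t^2) \<le> (t^2 * (2 * \<rho>)) * exp (2 * t^2)" using ub by (intro mult_right_mono) auto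
    then show ?thesis by (simp add: algebra_simps)
  qed
  have "abs (exp (- (t^2)) * ((exp u - 1) + (exp (- u) - 1)) / 2) \<le> 1 * (u * exp (2 * t^2) + u * exp (2 * t^2)) / 2"
  proof -
    have "\<bar>(exp u - 1) + (exp (- u) - 1)\<bar> \<le> u * exp (2 * t^2) + u * exp (2 * t^2)" using b1 b2 by linarith
    then have "exp (- (t^2)) * \<bar>(exp u - 1) + (exp (- u) - 1)\<bar> \<le> 1 * (u * exp (2 * t^2) + u * exp (2 * t^2))"
      using e0 e1 by (intro mult_mono) auto
    then show ?thesis by (simp add: abs_mult)
  qed
  then have "abs (exp (- (t^2)) * ((exp u - 1) + (exp (- u) - 1)) / 2) \<le> u * exp (2 * t^2)" by simp
  then have "abs (exp (- (t^2)) * ((exp u - 1) + (exp (- u) - 1)) / 2) \<le> (2 * t^2 * exp (2 * t^2)) * \<rho>"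
    using key by (rule order_trans)
  then show "abs (exp (- (t^2)) * ((exp (t^2 * r) - 1) + (exp (- (t^2 * r)) - 1)) / 2) \<le> (2 * t^2 * exp (2 * t^2)) * \<rho>"
    unfolding u_def .
  have "abs (exp (- (t^2)) * ((exp u - 1) - (exp (- u) - 1)) / 2) \<le> 1 * (u * exp (2 * t^2) + u * exp (2 * t^2)) / 2"
  proof -
    have "\<bar>(exp u - 1) - (exp (- u) - 1)\<bar> \<le> u * exp (2 * t^2) + u * exp (2 * t^2)" using b1 b2 by linarith
    then have "exp (- (t^2)) * \<bar>(exp u - 1) - (exp (- u) - 1)\<bar> \<le> 1 * (u * exp (2 * t^2) + u * exp (2 * t^2))"
      using e0 e1 by (intro mult_mono) auto
    then show ?thesis by (simp add: abs_mult)
  qed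
  then have "abs (exp (- (t^2)) * ((exp u - 1) - (exp (- u) - 1)) / 2) \<le> u * exp (2 * t^2)" by simp
  then have "abs (exp (- (t^2)) * ((exp u - 1) - (exp (- u) - 1)) / 2) \<le> (2 * t^2 * exp (2 * t^2)) * \<rho>"
    using key by (rule order_trans)
  then show "abs (exp (- (t^2)) * ((exp (t^2 * r) - 1) - (exp (- (t^2 * r)) - 1)) / 2) \<le> (2 * t^2 * exp (2 * t^2)) * \<rho>"
    unfolding u_def .
qed



lemma (in prob_space) bint:
  fixes f :: "'a \<Rightarrow> real"
  assumes "f \<in> borel_measurable M" "\<And>\<omega>. \<omega> \<in> space M \<Longrightarrow> \<bar>f \<omega>\<bar> \<le> K"
  shows "integrable M f"
  using assms by (intro integrable_const_bound[where B=K]) (auto intro!: AE_I2)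

lemma (in prob_space) trig_prod:
  fixes A C :: "'a \<Rightarrow> real"
  assumes [measurable]: "A \<in> borel_measurable M" "C \<in> borel_measurable M"
  shows "expectation (\<lambda>\<omega>. (1 + cos (A \<omega>)) * (1 + cos (C \<omega>))) = 1 + expectation (\<lambda>\<omega>. cos (A \<omega>)) + expectation (\<lambda>\<omega>. cos (C \<omega>))
           + (expectation (\<lambda>\<omega>. cos (A \<omega> + C \<omega>)) + expectation (\<lambda>\<omega>. cos (A \<omega> - C \<omega>))) / 2"
    and "expectation (\<lambda>\<omega>. (1 + sin (A \<omega>)) * (1 + sin (C \<omega>))) = 1 + expectation (\<lambda>\<omega>. sin (A \<omega>)) + expectation (\<lambda>\<omega>. sin (C \<omega>))
           + (expectation (\<lambda>\<omega>. cos (A \<omega> - C \<omega>)) - expectation (\<lambda>\<omega>. cos (A \<omega> + C \<omega>))) / 2"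
    and "integrable M (\<lambda>\<omega>. (1 + cos (A \<omega>)) * (1 + cos (C \<omega>)))"
    and "integrable M (\<lambda>\<omega>. (1 + sin (A \<omega>)) * (1 + sin (C \<omega>)))"
proof -
  have c1: "integrable M (\<lambda>\<omega>. cos (A \<omega>))" by (rule bint[where K=1]) auto
  have c2: "integrable M (\<lambda>\<omega>. cos (C \<omega>))" by (rule bint[where K=1]) auto
  have s1: "integrable M (\<lambda>\<omega>. sin (A \<omega>))" by (rule bint[where K=1]) auto
  have s2: "integrable M (\<lambda>\<omega>. sin (C \<omega>))" by (rule bint[where K=1]) auto
  have cp: "integrable M (\<lambda>\<omega>. cos (A \<omega> + C \<omega>))" by (rule bint[where K=1]) auto
  have cm: "integrable M (\<lambda>\<omega>. cos (A \<omega> - C \<omega>))" by (rule bint[where K=1]) auto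
  have pc: "(1 + cos (A \<omega>)) * (1 + cos (C \<omega>)) = 1 + cos (A \<omega>) + cos (C \<omega>) + (cos (A \<omega> + C \<omega>) + cos (A \<omega> - C \<omega>)) / 2" for \<omega>
    by (simp add: cos_add cos_diff algebra_simps)
  have ps: "(1 + sin (A \<omega>)) * (1 + sin (C \<omega>)) = 1 + sin (A \<omega>) + sin (C \<omega>) + (cos (A \<omega> - C \<omega>) - cos (A \<omega> + C \<omega>)) / 2" for \<omega>
    by (simp add: cos_add cos_diff algebra_simps)
  show "expectation (\<lambda>\<omega>. (1 + cos (A \<omega>)) * (1 + cos (C \<omega>))) = 1 + expectation (\<lambda>\<omega>. cos (A \<omega>)) + expectation (\<lambda>\<omega>. cos (C \<omega>))
           + (expectation (\<lambda>\<omega>. cos (A \<omega> + C \<omega>)) + expectation (\<lambda>\<omega>. cos (A \<omega> - C \<omega>))) / 2"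
    unfolding pc using c1 c2 cp cm by (simp add: prob_space)
  show "expectation (\<lambda>\<omega>. (1 + sin (A \<omega>)) * (1 + sin (C \<omega>))) = 1 + expectation (\<lambda>\<omega>. sin (A \<omega>)) + expectation (\<lambda>\<omega>. sin (C \<omega>))
           + (expectation (\<lambda>\<omega>. cos (A \<omega> - C \<omega>)) - expectation (\<lambda>\<omega>. cos (A \<omega> + C \<omega>))) / 2"
    unfolding ps using s1 s2 cp cm by (simp add: prob_space)
  show "integrable M (\<lambda>\<omega>. (1 + cos (A \<omega>)) * (1 + cos (C \<omega>)))"
    unfolding pc using c1 c2 cp cm by simp
  show "integrable M (\<lambda>\<omega>. (1 + sin (A \<omega>)) * (1 + sin (C \<omega>)))"
    unfolding ps using s1 s2 cp cm by simp
qed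

lemma (in prob_space) sq_prod:
  fixes U V :: "'a \<Rightarrow> real"
  assumes [measurable]: "U \<in> borel_measurable M" "V \<in> borel_measurable M"
  and i1: "integrable M (\<lambda>\<omega>. (U \<omega> + V \<omega>)^4)" and i2: "integrable M (\<lambda>\<omega>. (U \<omega> - V \<omega>)^4)"
  and i3: "integrable M (\<lambda>\<omega>. (U \<omega>)^4)" and i4: "integrable M (\<lambda>\<omega>. (V \<omega>)^4)"
  shows "integrable M (\<lambda>\<omega>. U \<omega>^2 * V \<omega>^2)"
    and "expectation (\<lambda>\<omega>. U \<omega>^2 * V \<omega>^2) = (expectation (\<lambda>\<omega>. (U \<omega> + V \<omega>)^4) + expectation (\<lambda>\<omega>. (U \<omega> - V \<omega>)^4)
          - 2 * expectation (\<lambda>\<omega>. (U \<omega>)^4) - 2 * expectation (\<lambda>\<omega>. (V \<omega>)^4)) / 12"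
proof -
  have p: "U \<omega>^2 * V \<omega>^2 = ((U \<omega> + V \<omega>)^4 + (U \<omega> - V \<omega>)^4 - 2 * (U \<omega>)^4 - 2 * (V \<omega>)^4) / 12" for \<omega>
    by (simp add: field_simps eval_nat_numeral)
  show "integrable M (\<lambda>\<omega>. U \<omega>^2 * V \<omega>^2)" unfolding p using i1 i2 i3 i4 by simp
  show "expectation (\<lambda>\<omega>. U \<omega>^2 * V \<omega>^2) = (expectation (\<lambda>\<omega>. (U \<omega> + V \<omega>)^4) + expectation (\<lambda>\<omega>. (U \<omega> - V \<omega>)^4)
          - 2 * expectation (\<lambda>\<omega>. (U \<omega>)^4) - 2 * expectation (\<lambda>\<omega>. (V \<omega>)^4)) / 12"
    unfolding p using i1 i2 i3 i4 by simp
qed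



context fbm_ctx
begin

abbreviation "gH \<equiv> min H (1 - H)"

lemma gH: "0 < gH" "gH \<le> 1" using H by auto

lemma rb: "1 \<le> j \<Longrightarrow> 1 \<le> k \<Longrightarrow> 0 \<le> r j k" "1 \<le> j \<Longrightarrow> 1 \<le> k \<Longrightarrow> r j k \<le> 2 * rho gH j k"
  "rho gH j k \<le> 1"
  using r_bounds[of j k] rho_le1[of gH j k] gH by auto

lemma Ecos1: "1 \<le> k \<Longrightarrow> expectation (\<lambda>\<omega>. cos (t * X k \<omega>)) = exp (- (t^2) / 2)"
  using pair_facts(1)[of k k t 0] by simp

lemma Esin1: "1 \<le> k \<Longrightarrow> expectation (\<lambda>\<omega>. sin (t * X k \<omega>)) = 0"
  using pair_facts(2)[of k k t 0] by simp

lemma Ecosp: "1 \<le> j \<Longrightarrow> 1 \<le> k \<Longrightarrow> expectation (\<lambda>\<omega>. cos (t * X j \<omega> + t * X k \<omega>)) = exp (- (t^2)) * exp (- (t^2 * r j k))"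
proof -
  assume jk: "1 \<le> j" "1 \<le> k"
  have "exp (- (t^2)) * exp (- (t^2 * r j k)) = exp (- (t^2 + t^2 + 2 * t * t * r j k) / 2)"
    by (simp add: mult_exp_exp field_simps power2_eq_square)
  then show ?thesis using pair_facts(1)[OF jk, of t t] by simp
qed

lemma Ecosm: "1 \<le> j \<Longrightarrow> 1 \<le> k \<Longrightarrow> expectation (\<lambda>\<omega>. cos (t * X j \<omega> - t * X k \<omega>)) = exp (- (t^2)) * exp (t^2 * r j k)"
proof -
  assume jk: "1 \<le> j" "1 \<le> k"
  have "exp (- (t^2)) * exp (t^2 * r j k) = exp (- (t^2 + (- t)^2 + 2 * t * (- t) * r j k) / 2)"
    by (simp add: mult_exp_exp field_simps power2_eq_square)
  moreover have "(\<lambda>\<omega>. cos (t * X j \<omega> + - t * X k \<omega>)) = (\<lambda>\<omega>. cos (t * X j \<omega> - t * X k \<omega>))" by simp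
  ultimately show ?thesis using pair_facts(1)[OF jk, of t "- t"] by simp
qed

lemma cos_as: "AE \<omega> in M. (\<lambda>n. (1 / ln (real n)) * (\<Sum>k=1..n. (1 / real k) * (1 + cos (t * X k \<omega>)))) \<longlonglongrightarrow> 1 + exp (- (t^2) / 2)"
proof (rule asclt_generic[where C = "2 * t^2 * exp (2 * t^2)" and g = gH])
  show "(\<lambda>\<omega>. 1 + cos (t * X k \<omega>)) \<in> borel_measurable M" for k by measurable
  show "0 \<le> 1 + cos (t * X k \<omega>)" for k \<omega> using cos_ge_minus_one[of "t * X k \<omega>"] by linarith
  show "integrable M (\<lambda>\<omega>. (1 + cos (t * X j \<omega>)) * (1 + cos (t * X k \<omega>)))" for j k
    by (rule trig_prod(3)) auto
  show "integrable M (\<lambda>\<omega>. 1 + cos (t * X k \<omega>))" for k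
  proof (rule bint[where K=2])
    show "(\<lambda>\<omega>. 1 + cos (t * X k \<omega>)) \<in> borel_measurable M" by measurable
    fix \<omega>
    have "-1 \<le> cos (t * X k \<omega>)" "cos (t * X k \<omega>) \<le> 1"
      using cos_ge_minus_one[of "t * X k \<omega>"] cos_le_one[of "t * X k \<omega>"] by auto
    then show "\<bar>1 + cos (t * X k \<omega>)\<bar> \<le> 2" unfolding abs_le_iff by linarith
  qed
  show "expectation (\<lambda>\<omega>. 1 + cos (t * X k \<omega>)) = 1 + exp (- (t^2) / 2)" if "1 \<le> k" for k
  proof -
    have "integrable M (\<lambda>\<omega>. cos (t * X k \<omega>))" by (rule bint[where K=1]) auto
    then show ?thesis using Ecos1[OF that, of t] by (simp add: prob_space)
  qed
  show "\<bar>expectation (\<lambda>\<omega>. (1 + cos (t * X j \<omega>)) * (1 + cos (t * X k \<omega>))) - (1 + exp (- (t^2) / 2))^2\<bar>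
        \<le> 2 * t^2 * exp (2 * t^2) * rho gH j k" if jk: "1 \<le> j" "1 \<le> k" for j k
  proof -
    define e1 where "e1 = exp (- (t^2) / 2)"
    define E0 where "E0 = exp (- (t^2))"
    define Ep where "Ep = exp (t^2 * r j k)"
    define Em where "Em = exp (- (t^2 * r j k))"
    have e1sq: "e1 * e1 = E0" unfolding e1_def E0_def by (simp add: mult_exp_exp)
    have "expectation (\<lambda>\<omega>. (1 + cos (t * X j \<omega>)) * (1 + cos (t * X k \<omega>))) = 1 + e1 + e1 + (E0 * Em + E0 * Ep) / 2"
      using trig_prod(1)[of "\<lambda>\<omega>. t * X j \<omega>" "\<lambda>\<omega>. t * X k \<omega>"] Ecos1[OF jk(1), of t] Ecos1[OF jk(2), of t]
        Ecosp[OF jk, of t] Ecosm[OF jk, of t]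
      unfolding e1_def E0_def Ep_def Em_def by simp
    then have "expectation (\<lambda>\<omega>. (1 + cos (t * X j \<omega>)) * (1 + cos (t * X k \<omega>))) - (1 + exp (- (t^2) / 2))^2
       = E0 * ((Ep - 1) + (Em - 1)) / 2"
      using e1sq unfolding e1_def[symmetric] by (simp add: power2_eq_square algebra_simps)
    moreover have "\<bar>E0 * ((Ep - 1) + (Em - 1)) / 2\<bar> \<le> 2 * t^2 * exp (2 * t^2) * rho gH j k"
      unfolding E0_def Ep_def Em_def by (rule cov_trig_bound(1)) (use rb jk in auto)
    ultimately show ?thesis by simp
  qed
qed (use gH in auto)

lemma sin_as: "AE \<omega> in M. (\<lambda>n. (1 / ln (real n)) * (\<Sum>k=1..n. (1 / real k) * (1 + sin (t * X k \<omega>)))) \<longlonglongrightarrow> 1"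
proof (rule asclt_generic[where C = "2 * t^2 * exp (2 * t^2)" and g = gH])
  show "(\<lambda>\<omega>. 1 + sin (t * X k \<omega>)) \<in> borel_measurable M" for k by measurable
  show "0 \<le> 1 + sin (t * X k \<omega>)" for k \<omega> using sin_ge_minus_one[of "t * X k \<omega>"] by linarith
  show "integrable M (\<lambda>\<omega>. (1 + sin (t * X j \<omega>)) * (1 + sin (t * X k \<omega>)))" for j k
    by (rule trig_prod(4)) auto
  show "integrable M (\<lambda>\<omega>. 1 + sin (t * X k \<omega>))" for k
  proof (rule bint[where K=2])
    show "(\<lambda>\<omega>. 1 + sin (t * X k \<omega>)) \<in> borel_measurable M" by measurable
    fix \<omega>
    have "-1 \<le> sin (t * X k \<omega>)" "sin (t * X k \<omega>) \<le> 1"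
      using sin_ge_minus_one[of "t * X k \<omega>"] sin_le_one[of "t * X k \<omega>"] by auto
    then show "\<bar>1 + sin (t * X k \<omega>)\<bar> \<le> 2" unfolding abs_le_iff by linarith
  qed
  show "expectation (\<lambda>\<omega>. 1 + sin (t * X k \<omega>)) = 1" if "1 \<le> k" for k
  proof -
    have "integrable M (\<lambda>\<omega>. sin (t * X k \<omega>))" by (rule bint[where K=1]) auto
    then show ?thesis using Esin1[OF that, of t] by (simp add: prob_space)
  qed
  show "\<bar>expectation (\<lambda>\<omega>. (1 + sin (t * X j \<omega>)) * (1 + sin (t * X k \<omega>))) - 1^2\<bar>
        \<le> 2 * t^2 * exp (2 * t^2) * rho gH j k" if jk: "1 \<le> j" "1 \<le> k" for j k
  proof -
    define E0 where "E0 = exp (- (t^2))"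
    define Ep where "Ep = exp (t^2 * r j k)"
    define Em where "Em = exp (- (t^2 * r j k))"
    have "expectation (\<lambda>\<omega>. (1 + sin (t * X j \<omega>)) * (1 + sin (t * X k \<omega>))) = 1 + (E0 * Ep - E0 * Em) / 2"
      using trig_prod(2)[of "\<lambda>\<omega>. t * X j \<omega>" "\<lambda>\<omega>. t * X k \<omega>"] Esin1[OF jk(1), of t] Esin1[OF jk(2), of t]
        Ecosp[OF jk, of t] Ecosm[OF jk, of t]
      unfolding E0_def Ep_def Em_def by simp
    then have "expectation (\<lambda>\<omega>. (1 + sin (t * X j \<omega>)) * (1 + sin (t * X k \<omega>))) - 1^2
       = E0 * ((Ep - 1) - (Em - 1)) / 2"
      by (simp add: algebra_simps)
    moreover have "\<bar>E0 * ((Ep - 1) - (Em - 1)) / 2\<bar> \<le> 2 * t^2 * exp (2 * t^2) * rho gH j k"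
      unfolding E0_def Ep_def Em_def by (rule cov_trig_bound(2)) (use rb jk in auto)
    ultimately show ?thesis by simp
  qed
qed (use gH in auto)

lemma X4: "1 \<le> k \<Longrightarrow> integrable M (\<lambda>\<omega>. (X k \<omega>)^4) \<and> expectation (\<lambda>\<omega>. (X k \<omega>)^4) = 3"
  using pair_facts(3,4)[of k k 1 0] r_diag[of k] by simp

lemma sq_as: "AE \<omega> in M. (\<lambda>n. (1 / ln (real n)) * (\<Sum>k=1..n. (1 / real k) * (X k \<omega>)^2)) \<longlonglongrightarrow> 1"
proof (rule asclt_generic[where C = 8 and g = gH])
  show "(\<lambda>\<omega>. (X k \<omega>)^2) \<in> borel_measurable M" for k by measurable
  show "0 \<le> (X k \<omega>)^2" for k \<omega> by simp
  fix j k :: nat assume jk: "1 \<le> j" "1 \<le> k"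
  have p4: "integrable M (\<lambda>\<omega>. (X j \<omega> + X k \<omega>)^4)" "integrable M (\<lambda>\<omega>. (X j \<omega> - X k \<omega>)^4)"
    "expectation (\<lambda>\<omega>. (X j \<omega> + X k \<omega>)^4) = 3 * (2 + 2 * r j k)^2"
    "expectation (\<lambda>\<omega>. (X j \<omega> - X k \<omega>)^4) = 3 * (2 - 2 * r j k)^2"
    using pair_facts(3,4)[OF jk, of 1 1] pair_facts(3,4)[OF jk, of 1 "-1"] by simp_all
  note S = sq_prod[of "X j" "X k", OF Xmeas Xmeas p4(1,2) conjunct1[OF X4[OF jk(1)]] conjunct1[OF X4[OF jk(2)]]]
  show "integrable M (\<lambda>\<omega>. (X j \<omega>)^2 * (X k \<omega>)^2)" by (rule S(1))
  have E: "expectation (\<lambda>\<omega>. (X j \<omega>)^2 * (X k \<omega>)^2) = 1 + 2 * (r j k)^2"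
    using S(2) p4(3,4) X4[OF jk(1)] X4[OF jk(2)] by (simp add: power2_eq_square algebra_simps)
  have "\<bar>2 * (r j k)^2\<bar> \<le> 8 * rho gH j k"
  proof -
    have a: "0 \<le> r j k" "r j k \<le> 2 * rho gH j k" "rho gH j k \<le> 1" using rb jk by auto
    have "r j k * r j k \<le> (2 * rho gH j k) * 2" using a by (intro mult_mono) auto
    then show ?thesis using a by (simp add: power2_eq_square)
  qed
  then show "\<bar>expectation (\<lambda>\<omega>. (X j \<omega>)^2 * (X k \<omega>)^2) - 1^2\<bar> \<le> 8 * rho gH j k" using E by simp
next
  fix k :: nat assume k: "1 \<le> k"
  show "integrable M (\<lambda>\<omega>. (X k \<omega>)^2)" using Xprod[OF k k] by (simp add: power2_eq_square)
  show "expectation (\<lambda>\<omega>. (X k \<omega>)^2) = 1" using Xprod[OF k k] r_diag[OF k] by (simp add: power2_eq_square)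
qed (use gH in auto)

end



lemma sub_one:
  fixes f :: "nat \<Rightarrow> real"
  assumes "(\<lambda>n. (1 / ln (real n)) * (\<Sum>k=1..n. (1 / real k) * (1 + f k))) \<longlonglongrightarrow> 1 + L"
  shows "(\<lambda>n. (1 / ln (real n)) * (\<Sum>k=1..n. (1 / real k) * f k)) \<longlonglongrightarrow> L"
proof -
  have "(\<lambda>n. (1 / ln (real n)) * (\<Sum>k=1..n. (1 / real k) * (1 + f k)) - harm n / ln (real n)) \<longlonglongrightarrow> (1 + L) - 1"
    by (intro tendsto_diff assms harm_over_ln)
  moreover have "(1 / ln (real n)) * (\<Sum>k=1..n. (1 / real k) * (1 + f k)) - harm n / ln (real n)
      = (1 / ln (real n)) * (\<Sum>k=1..n. (1 / real k) * f k)" for n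
  proof -
    have "(\<Sum>k=1..n. (1 / real k) * (1 + f k)) = harm n + (\<Sum>k=1..n. (1 / real k) * f k)"
      unfolding harm_eq sum.distrib[symmetric] by (intro sum.cong refl) (simp add: add_divide_distrib)
    then show ?thesis by (simp add: algebra_simps)
  qed
  ultimately show ?thesis by simp
qed

theorem mainTheorem6:
  fixes M :: "'a measure" and H :: real and B :: "real \<Rightarrow> 'a \<Rightarrow> real"
  assumes "fbm M H B"
  shows "AE \<omega> in M. \<forall>\<phi> :: real \<Rightarrow> real. continuous_on UNIV \<phi> \<longrightarrow> bounded (range \<phi>) \<longrightarrow>
           (\<lambda>n::nat. (1 / ln (real n)) * (\<Sum>k=1..n. (1 / real k) * \<phi> (B (real k) \<omega> / real k powr H)))
             \<longlonglongrightarrow> integral\<^sup>L (density lborel std_normal_density) \<phi>"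
proof -
  interpret fbm_ctx M H B by unfold_locales (rule assms)
  have AEc: "AE \<omega> in M. \<forall>t\<in>\<rat>. (\<lambda>n. (1 / ln (real n)) * (\<Sum>k=1..n. (1 / real k) * (1 + cos (t * X k \<omega>)))) \<longlonglongrightarrow> 1 + exp (- (t^2) / 2)"
    by (subst AE_ball_countable[OF countable_rat]) (intro ballI cos_as)
  have AEs: "AE \<omega> in M. \<forall>t\<in>\<rat>. (\<lambda>n. (1 / ln (real n)) * (\<Sum>k=1..n. (1 / real k) * (1 + sin (t * X k \<omega>)))) \<longlonglongrightarrow> 1"
    by (subst AE_ball_countable[OF countable_rat]) (intro ballI sin_as)
  show ?thesis
    using AEc AEs sq_as
  proof eventually_elim
    case (elim \<omega>)
    show ?case
    proof (intro allI impI)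
      fix \<phi> :: "real \<Rightarrow> real" assume cont: "continuous_on UNIV \<phi>" and bdd: "bounded (range \<phi>)"
      have "(\<lambda>n. (1 / ln (real n)) * (\<Sum>k=1..n. (1 / real k) * \<phi> (X k \<omega>))) \<longlonglongrightarrow> integral\<^sup>L std_normal_distribution \<phi>"
      proof (rule det_conv[of "\<lambda>k. X k \<omega>", OF _ _ _ cont bdd])
        show "(\<lambda>n. (1 / ln (real n)) * (\<Sum>k=1..n. (1 / real k) * cos (t * X k \<omega>))) \<longlonglongrightarrow> exp (- (t^2) / 2)"
          if "t \<in> \<rat>" for t
        proof (rule sub_one)
          show "(\<lambda>n. (1 / ln (real n)) * (\<Sum>k=1..n. (1 / real k) * (1 + cos (t * X k \<omega>)))) \<longlonglongrightarrow> 1 + exp (- (t^2) / 2)"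
            using elim(1) that by blast
        qed
        show "(\<lambda>n. (1 / ln (real n)) * (\<Sum>k=1..n. (1 / real k) * sin (t * X k \<omega>))) \<longlonglongrightarrow> 0"
          if "t \<in> \<rat>" for t
        proof (rule sub_one)
          have "(\<lambda>n. (1 / ln (real n)) * (\<Sum>k=1..n. (1 / real k) * (1 + sin (t * X k \<omega>)))) \<longlonglongrightarrow> 1"
            using elim(2) that by blast
          then show "(\<lambda>n. (1 / ln (real n)) * (\<Sum>k=1..n. (1 / real k) * (1 + sin (t * X k \<omega>)))) \<longlonglongrightarrow> 1 + 0"
            by simp
        qed
        show "(\<lambda>n. (1 / ln (real n)) * (\<Sum>k=1..n. (1 / real k) * (X k \<omega>)^2)) \<longlonglongrightarrow> 1"
          by (rule elim(3))
      qed
      then show "(\<lambda>n::nat. (1 / ln (real n)) * (\<Sum>k=1..n. (1 / real k) * \<phi> (B (real k) \<omega> / real k powr H)))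
             \<longlonglongrightarrow> integral\<^sup>L (density lborel std_normal_density) \<phi>"
        unfolding X_def .
    qed
  qed
qed


end
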